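(* Assume $\gamma<1$. For $(K,\Sigma)\in\Omega$, $$\nabla_Kf(K,\Sigma)=E_KS_{K,\Sigma},\qquad \nabla_\Sigma f(K,\Sigma)=(1-\gamma)^{-1}\Big(\big(R+\gamma P_K(B^\top B+D^\top D)\big)^\top-\frac{\tau}{2}\Sigma^{-1}\Big),$$ where $E_K=2RK+2\gamma P_K\big[(B^\top B+D^\top D)K-AB^\top\big]$ and $S_{K,\Sigma}=\sum_{t=0}^\infty\gamma^t\mathbb{E}[x_t^2]$, the expectation being over the trajectory under the policy $u_t\sim\mathcal N(-Kx_t,\Sigma)$ with $x_0\sim\mathcal D$.
   Context: Setting: $n\ge1$, $A,C\in\mathbb{R}$, $B\in\mathbb{R}^{1\times n}$ (row vector), $D\in\mathbb{R}^{n\times n}$, $Q\in\mathbb{R}$, $R\in\mathbb{R}^{n\times n}$ symmetric, $\gamma\in(0,1)$, $\tau>0$. Dynamics $x_{t+1}=(A+w_t^xC)x_t+(B+w_t^uD)u_t$ with $x_t\in\mathbb{R}$, $u_t\in\mathbb{R}^n$, white noises $w_t^x\in\mathbb{R}$, $w_t^u\in\mathbb{R}^{1\times n}$ independent across time, of each other and of the controls, $\mathbb{E}w_t^x=0$, $\mathbb{E}(w_t^x)^2=1$, $\mathbb{E}w_t^u=0$, $\mathbb{E}[(w_t^u)^\top w_t^u]=I_n$. Policy parameters: $K\in\mathbb{R}^n$, $\Sigma$ symmetric positive definite; $u_t\sim\mathcal N(-Kx_t,\Sigma)$. $V_K=A^2+C^2+K^\top(B^\top B+D^\top D)K-2ABK$,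 $\Omega=\{(K,\Sigma):\Sigma=\Sigma^\top\succ0,\ \gamma V_K<1\}$. Initial state $x_0\sim\mathcal D$, $\mu=\mathbb{E}x_0^2$. Cost $f(K,\Sigma)=\mathbb{E}\big[\sum_{t\ge0}\gamma^t(Qx_t^2+u_t^\top Ru_t+\tau\log\pi_{K,\Sigma}(u_t|x_t))\big]$ with $\pi_{K,\Sigma}(\cdot|x)$ the density of $\mathcal N(-Kx,\Sigma)$. $P_K=(Q+K^\top RK)/(1-\gamma V_K)$ (the solution of $P_K=Q+K^\top RK+\gamma P_KV_K$). Gradients are with respect to the entries of $K$ and of $\Sigma$. *)

theory Defs
  imports "HOL-Analysis.Analysis" "HOL-Probability.Probability"
begin

text \<open>Dimension n = CARD('n). Row vectors (B, w^u) and column vectors (K, u) are both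
  represented as real^'n; B u is the inner product B \<bullet> u, and w^u D is w^u v* D.\<close>

definition pos_def_mat :: "real^'n^'n \<Rightarrow> bool" where
  "pos_def_mat S \<longleftrightarrow> transpose S = S \<and> (\<forall>v. v \<noteq> 0 \<longrightarrow> v \<bullet> (S *v v) > 0)"

definition Mmat :: "real^'n \<Rightarrow> real^'n^'n \<Rightarrow> real^'n^'n" where
  "Mmat B D = (\<chi> i j. B $ i * B $ j) + transpose D ** D"

definition VK :: "real \<Rightarrow> real^'n \<Rightarrow> real \<Rightarrow> real^'n^'n \<Rightarrow> real^'n \<Rightarrow> real" where
  "VK A B C D K = A\<^sup>2 + C\<^sup>2 + K \<bullet> (Mmat B D *v K) - 2 * A * (B \<bullet> K)"

definition Omega :: "real \<Rightarrow> real \<Rightarrow> real^'n \<Rightarrow> real \<Rightarrow> real^'n^'n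
    \<Rightarrow> ((real^'n) \<times> (real^'n^'n)) set" where
  "Omega \<gamma> A B C D = {(K, S). pos_def_mat S \<and> \<gamma> * VK A B C D K < 1}"

definition PK :: "real \<Rightarrow> real \<Rightarrow> real^'n \<Rightarrow> real \<Rightarrow> real^'n^'n \<Rightarrow> real
    \<Rightarrow> real^'n^'n \<Rightarrow> real^'n \<Rightarrow> real" where
  "PK \<gamma> A B C D Q R K = (Q + K \<bullet> (R *v K)) / (1 - \<gamma> * VK A B C D K)"

text \<open>A (fixed) matrix square root L with L L^T = S, used to sample u ~ N(m, S) as m + L \<xi>
  with \<xi> a standard Gaussian vector.\<close>
definition msqrt :: "real^'n^'n \<Rightarrow> real^'n^'n" where
  "msqrt S = (SOME L. L ** transpose L = S)"

definition gauss_logpdf :: "real^'n^'n \<Rightarrow> real^'n \<Rightarrow> real^'n \<Rightarrow> real" where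
  "gauss_logpdf S m u = - (real CARD('n) / 2) * ln (2 * pi) - ln (det S) / 2
      - ((u - m) \<bullet> (matrix_inv S *v (u - m))) / 2"

definition act :: "real^'n^'n \<Rightarrow> (nat \<Rightarrow> 'a \<Rightarrow> real^'n) \<Rightarrow> real^'n \<Rightarrow> nat \<Rightarrow> real \<Rightarrow> 'a \<Rightarrow> real^'n" where
  "act S xi K t x \<omega> = - (x *\<^sub>R K) + msqrt S *v xi t \<omega>"

fun traj :: "real \<Rightarrow> real^'n \<Rightarrow> real \<Rightarrow> real^'n^'n \<Rightarrow> ('a \<Rightarrow> real) \<Rightarrow> (nat \<Rightarrow> 'a \<Rightarrow> real)
    \<Rightarrow> (nat \<Rightarrow> 'a \<Rightarrow> real^'n) \<Rightarrow> (nat \<Rightarrow> 'a \<Rightarrow> real^'n) \<Rightarrow> real^'n \<Rightarrow> real^'n^'n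
    \<Rightarrow> nat \<Rightarrow> 'a \<Rightarrow> real" where
  "traj A B C D x0 wx wu xi K S 0 \<omega> = x0 \<omega>"
| "traj A B C D x0 wx wu xi K S (Suc t) \<omega> =
     (let x = traj A B C D x0 wx wu xi K S t \<omega> in
      (A + wx t \<omega> * C) * x + (B + wu t \<omega> v* D) \<bullet> act S xi K t x \<omega>)"

definition cost_f :: "'a measure \<Rightarrow> real \<Rightarrow> real^'n \<Rightarrow> real \<Rightarrow> real^'n^'n \<Rightarrow> real \<Rightarrow> real^'n^'n
    \<Rightarrow> real \<Rightarrow> real \<Rightarrow> ('a \<Rightarrow> real) \<Rightarrow> (nat \<Rightarrow> 'a \<Rightarrow> real)
    \<Rightarrow> (nat \<Rightarrow> 'a \<Rightarrow> real^'n) \<Rightarrow> (nat \<Rightarrow> 'a \<Rightarrow> real^'n) \<Rightarrow> real^'n \<Rightarrow> real^'n^'n \<Rightarrow> real" where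
  "cost_f M A B C D Q R \<gamma> \<tau> x0 wx wu xi K S =
     (\<Sum>t. \<gamma> ^ t * (\<integral>\<omega>. (let x = traj A B C D x0 wx wu xi K S t \<omega>;
                              u = act S xi K t x \<omega> in
                          Q * x\<^sup>2 + u \<bullet> (R *v u) + \<tau> * gauss_logpdf S (- (x *\<^sub>R K)) u) \<partial>M))"

definition S_KS :: "'a measure \<Rightarrow> real \<Rightarrow> real^'n \<Rightarrow> real \<Rightarrow> real^'n^'n \<Rightarrow> real
    \<Rightarrow> ('a \<Rightarrow> real) \<Rightarrow> (nat \<Rightarrow> 'a \<Rightarrow> real)
    \<Rightarrow> (nat \<Rightarrow> 'a \<Rightarrow> real^'n) \<Rightarrow> (nat \<Rightarrow> 'a \<Rightarrow> real^'n) \<Rightarrow> real^'n \<Rightarrow> real^'n^'n \<Rightarrow> real" where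
  "S_KS M A B C D \<gamma> x0 wx wu xi K S =
     (\<Sum>t. \<gamma> ^ t * (\<integral>\<omega>. (traj A B C D x0 wx wu xi K S t \<omega>)\<^sup>2 \<partial>M))"

definition EK :: "real \<Rightarrow> real \<Rightarrow> real^'n \<Rightarrow> real \<Rightarrow> real^'n^'n \<Rightarrow> real
    \<Rightarrow> real^'n^'n \<Rightarrow> real^'n \<Rightarrow> real^'n" where
  "EK \<gamma> A B C D Q R K = 2 *\<^sub>R (R *v K)
     + (2 * \<gamma> * PK \<gamma> A B C D Q R K) *\<^sub>R (Mmat B D *v K - A *\<^sub>R B)"

text \<open>Random sources: all embedded in real \<times> real^'n for a single independence statement.\<close>
datatype src = Init | Wx nat | Wu nat | Xi nat

definition srcvar :: "('a \<Rightarrow> real) \<Rightarrow> (nat \<Rightarrow> 'a \<Rightarrow> real) \<Rightarrow> (nat \<Rightarrow> 'a \<Rightarrow> real^'n)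
    \<Rightarrow> (nat \<Rightarrow> 'a \<Rightarrow> real^'n) \<Rightarrow> src \<Rightarrow> 'a \<Rightarrow> real \<times> (real^'n)" where
  "srcvar x0 wx wu xi i \<omega> = (case i of Init \<Rightarrow> (x0 \<omega>, 0) | Wx t \<Rightarrow> (wx t \<omega>, 0)
      | Wu t \<Rightarrow> (0, wu t \<omega>) | Xi t \<Rightarrow> (0, xi t \<omega>))"

end

theory Submission
  imports Defs
begin

definition symI :: "'n set \<Rightarrow> ('n \<Rightarrow> 'n \<Rightarrow> real) \<Rightarrow> bool" where
  "symI I S \<longleftrightarrow> (\<forall>i\<in>I. \<forall>j\<in>I. S i j = S j i)"

definition pdI :: "'n set \<Rightarrow> ('n \<Rightarrow> 'n \<Rightarrow> real) \<Rightarrow> bool" where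
  "pdI I S \<longleftrightarrow> (\<forall>v. (\<forall>i. i \<notin> I \<longrightarrow> v i = 0) \<longrightarrow> (\<exists>i\<in>I. v i \<noteq> 0) \<longrightarrow>
      (\<Sum>i\<in>I. \<Sum>j\<in>I. v i * S i j * v j) > 0)"

lemma chol_aux:
  assumes "finite I"
  shows "symI I S \<Longrightarrow> pdI I S \<Longrightarrow> \<exists>L. \<forall>i\<in>I. \<forall>j\<in>I. (\<Sum>k\<in>I. L i k * L j k) = S i j"
  using assms
proof (induction I arbitrary: S rule: finite_induct)
  case empty
  then show ?case by auto
next
  case (insert a I)
  define d where "d = S a a"
  have dpos: "d > 0"
  proof -
    have "(\<Sum>i\<in>insert a I. \<Sum>j\<in>insert a I. (\<lambda>k. if k = a then 1 else 0) i * S i j * (\<lambda>k. if k = a then 1 else (0::real)) j) > 0"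
      using insert.prems(2) unfolding pdI_def by (erule_tac x="\<lambda>k. if k = a then 1 else 0" in allE) auto
    also have "(\<Sum>i\<in>insert a I. \<Sum>j\<in>insert a I. (\<lambda>k. if k = a then 1 else 0) i * S i j * (\<lambda>k. if k = a then 1 else (0::real)) j) = S a a"
    proof -
      have na: "\<And>i. i \<in> I \<Longrightarrow> i \<noteq> a" using insert.hyps by auto
      have z1: "(\<Sum>j\<in>I. S a j * (if j = a then 1 else 0)) = 0"
        by (rule sum.neutral) (auto dest: na)
      have z2: "(\<Sum>i\<in>I. (if i = a then 1 else 0) * S i a + (\<Sum>j\<in>I. (if i = a then 1 else 0) * S i j * (if j = a then 1 else (0::real)))) = 0"
        by (rule sum.neutral) (auto dest: na)
      show ?thesis using insert.hyps z1 z2 by simp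
    qed
    finally show ?thesis by (simp add: d_def)
  qed
  have symA: "\<And>i j. i \<in> insert a I \<Longrightarrow> j \<in> insert a I \<Longrightarrow> S i j = S j i"
    using insert.prems(1) unfolding symI_def by blast
  define S' where "S' i j = S i j - S i a * S j a / d" for i j
  have sym': "symI I S'"
    unfolding symI_def S'_def
  proof (intro ballI)
    fix i j assume "i \<in> I" "j \<in> I"
    then have "S i j = S j i" using symA by blast
    then show "S i j - S i a * S j a / d = S j i - S j a * S i a / d" by (simp add: mult.commute)
  qed
  have pd': "pdI I S'"
    unfolding pdI_def
  proof (intro allI impI)
    fix v :: "'a \<Rightarrow> real"
    assume v0: "\<forall>i. i \<notin> I \<longrightarrow> v i = 0" and vnz: "\<exists>i\<in>I. v i \<noteq> 0"
    define s where "s = (\<Sum>j\<in>I. S a j * v j)"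
    define w where "w = v(a := - s / d)"
    have w0: "\<forall>i. i \<notin> insert a I \<longrightarrow> w i = 0" using v0 by (auto simp: w_def)
    have wnz: "\<exists>i\<in>insert a I. w i \<noteq> 0" using vnz insert.hyps by (auto simp: w_def)
    have pos: "(\<Sum>i\<in>insert a I. \<Sum>j\<in>insert a I. w i * S i j * w j) > 0"
      using insert.prems(2)[unfolded pdI_def, THEN spec[of _ w], THEN mp, OF w0, THEN mp, OF wnz] .
    have wI: "\<And>i. i \<in> I \<Longrightarrow> w i = v i" using insert.hyps by (auto simp: w_def)
    have wa: "w a = - s / d" by (simp add: w_def)
    have symS: "\<And>j. j \<in> I \<Longrightarrow> S j a = S a j" using symA by blast
    have "(\<Sum>i\<in>insert a I. \<Sum>j\<in>insert a I. w i * S i j * w j)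
        = w a * S a a * w a + (\<Sum>j\<in>I. w a * S a j * w j) + (\<Sum>i\<in>I. w i * S i a * w a)
          + (\<Sum>i\<in>I. \<Sum>j\<in>I. w i * S i j * w j)"
      using insert.hyps by (simp add: sum.insert sum.distrib)
    also have "\<dots> = (- s / d) * d * (- s / d) + 2 * (- s / d) * s + (\<Sum>i\<in>I. \<Sum>j\<in>I. v i * S i j * v j)"
    proof -
      have e1: "(\<Sum>j\<in>I. w a * S a j * w j) = (- s / d) * s"
      proof -
        have "(\<Sum>j\<in>I. w a * S a j * w j) = (\<Sum>j\<in>I. w a * (S a j * v j))"
          by (rule sum.cong) (simp_all add: wI)
        then show ?thesis by (simp only: sum_distrib_left[symmetric] s_def[symmetric] wa)
      qed
      have e2: "(\<Sum>i\<in>I. w i * S i a * w a) = (- s / d) * s"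
      proof -
        have "(\<Sum>i\<in>I. w i * S i a * w a) = (\<Sum>i\<in>I. w a * (S a i * v i))"
          by (rule sum.cong) (simp_all add: wI symS)
        then show ?thesis by (simp only: sum_distrib_left[symmetric] s_def[symmetric] wa)
      qed
      have e3: "(\<Sum>i\<in>I. \<Sum>j\<in>I. w i * S i j * w j) = (\<Sum>i\<in>I. \<Sum>j\<in>I. v i * S i j * v j)"
        by (simp add: wI)
      show ?thesis using e1 e2 e3 by (simp add: w_def d_def)
    qed
    also have "\<dots> = (\<Sum>i\<in>I. \<Sum>j\<in>I. v i * S i j * v j) - s * s / d"
      using dpos by (simp add: field_simps power2_eq_square)
    also have "\<dots> = (\<Sum>i\<in>I. \<Sum>j\<in>I. v i * S' i j * v j)"
    proof -
      have "(\<Sum>i\<in>I. \<Sum>j\<in>I. v i * S' i j * v j) = (\<Sum>i\<in>I. \<Sum>j\<in>I. v i * S i j * v j - (v i * S a i) * (S a j * v j) / d)"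
        by (intro sum.cong refl) (simp add: S'_def symS field_simps)
      also have "\<dots> = (\<Sum>i\<in>I. \<Sum>j\<in>I. v i * S i j * v j) - (\<Sum>i\<in>I. \<Sum>j\<in>I. (v i * S a i) * (S a j * v j) / d)"
        by (simp add: sum_subtractf)
      also have "(\<Sum>i\<in>I. \<Sum>j\<in>I. (v i * S a i) * (S a j * v j) / d) = s * s / d"
        by (simp add: s_def sum_divide_distrib[symmetric] sum_product mult.commute)
      finally show ?thesis by simp
    qed
    finally show "(\<Sum>i\<in>I. \<Sum>j\<in>I. v i * S' i j * v j) > 0" using pos by simp
  qed
  obtain L' where L': "\<forall>i\<in>I. \<forall>j\<in>I. (\<Sum>k\<in>I. L' i k * L' j k) = S' i j"
    using insert.IH[OF sym' pd'] by blast
  define L where "L i k = (if k = a then (if i = a then sqrt d else S i a / sqrt d) else if i = a then 0 else L' i k)" for i k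
  have sq: "sqrt d * sqrt d = d" using dpos by simp
  show ?case
  proof (intro exI ballI)
    fix i j assume i: "i \<in> insert a I" and j: "j \<in> insert a I"
    have LI: "(\<Sum>k\<in>I. L i k * L j k) = (if i = a \<or> j = a then 0 else (\<Sum>k\<in>I. L' i k * L' j k))"
    proof -
      have kna: "\<And>k. k \<in> I \<Longrightarrow> k \<noteq> a" using insert.hyps by auto
      have "(\<Sum>k\<in>I. L i k * L j k) = (\<Sum>k\<in>I. if i = a \<or> j = a then 0 else L' i k * L' j k)"
        by (rule sum.cong) (auto simp: L_def dest: kna)
      then show ?thesis by simp
    qed
    have "(\<Sum>k\<in>insert a I. L i k * L j k) = L i a * L j a + (\<Sum>k\<in>I. L i k * L j k)"
      using insert.hyps by simp
    also have "\<dots> = S i j"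
    proof (cases "i = a")
      case True
      then show ?thesis
      proof (cases "j = a")
        case True with \<open>i = a\<close> show ?thesis using LI sq by (simp add: L_def d_def)
      next
        case False
        then have "j \<in> I" using j by auto
        then have "S j a = S a j" using symA by blast
        then show ?thesis using LI \<open>i = a\<close> False dpos
          by (simp add: L_def)
      qed
    next
      case False
      then have iI: "i \<in> I" using i by auto
      show ?thesis
      proof (cases "j = a")
        case True then show ?thesis using LI False dpos by (simp add: L_def)
      next
        case False
        then have "j \<in> I" using j by auto
        then show ?thesis using LI \<open>i \<noteq> a\<close> False dpos L' iI
          by (simp add: L_def S'_def)
      qed
    qed
    finally show "(\<Sum>k\<in>insert a I. L i k * L j k) = S i j" .
  qed
qed

lemma inner_mv: "(x::real^'n) \<bullet> (S *v y) = (\<Sum>i\<in>UNIV. \<Sum>j\<in>UNIV. x$i * S$i$j * y$j)"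
  by (simp add: inner_vec_def matrix_vector_mult_def sum_distrib_left mult.assoc)

lemma pos_def_chol:
  fixes S :: "real^'n^'n"
  assumes "pos_def_mat S"
  shows "\<exists>L::real^'n^'n. L ** transpose L = S"
proof -
  have sym: "symI UNIV (\<lambda>i j. S$i$j)"
    using assms unfolding pos_def_mat_def symI_def by (metis transpose_def vec_lambda_beta)
  have pd: "pdI UNIV (\<lambda>i j. S$i$j)"
    unfolding pdI_def
  proof (intro allI impI)
    fix v :: "'n \<Rightarrow> real" assume "\<forall>i. i \<notin> UNIV \<longrightarrow> v i = 0" "\<exists>i\<in>UNIV. v i \<noteq> 0"
    then have "(\<chi> i. v i) \<noteq> 0" by (auto simp: vec_eq_iff)
    then have "(\<chi> i. v i) \<bullet> (S *v (\<chi> i. v i)) > 0" using assms unfolding pos_def_mat_def by blast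
    then show "(\<Sum>i\<in>UNIV. \<Sum>j\<in>UNIV. v i * S$i$j * v j) > 0" by (simp add: inner_mv)
  qed
  obtain L where L: "\<forall>i\<in>UNIV. \<forall>j\<in>UNIV. (\<Sum>k::'n\<in>UNIV. L i k * L j k) = S$i$j"
    using chol_aux[of UNIV "\<lambda>i j. S$i$j"] sym pd by auto
  have "(\<chi> i k. L i k) ** transpose (\<chi> i k. L i k) = S"
    using L by (simp add: vec_eq_iff matrix_matrix_mult_def transpose_def)
  then show ?thesis by blast
qed

lemma msqrt_prop: "pos_def_mat S \<Longrightarrow> msqrt S ** transpose (msqrt S) = S"
  unfolding msqrt_def using pos_def_chol by (rule someI_ex)

lemma pd_inj: "pos_def_mat S \<Longrightarrow> S *v x = 0 \<Longrightarrow> x = (0::real^'n)"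
  unfolding pos_def_mat_def by force

lemma pd_invertible: "pos_def_mat (S::real^'n^'n) \<Longrightarrow> invertible S"
  using pd_inj matrix_left_invertible_ker invertible_left_inverse by metis

lemma invertible_inv: "invertible (S::real^'n^'n) \<Longrightarrow> S ** matrix_inv S = mat 1 \<and> matrix_inv S ** S = mat 1"
  unfolding invertible_def matrix_inv_def by (rule someI_ex)

lemma pd_det_pos: "pos_def_mat (S::real^'n^'n) \<Longrightarrow> det S > 0"
proof -
  assume a: "pos_def_mat S"
  have "det S = det (msqrt S) * det (msqrt S)"
    using msqrt_prop[OF a] det_mul[of "msqrt S" "transpose (msqrt S)"] by simp
  moreover have "det S \<noteq> 0" using pd_invertible[OF a] invertible_det_nz by blast
  ultimately show ?thesis by (metis mult_eq_0_iff not_real_square_gt_zero)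
qed

lemma inv_sym:
  fixes S :: "real^'n^'n"
  assumes "transpose S = S" "invertible S"
  shows "transpose (matrix_inv S) = matrix_inv S"
proof -
  have i: "S ** matrix_inv S = mat 1" "matrix_inv S ** S = mat 1" using invertible_inv[OF assms(2)] by auto
  have "S ** transpose (matrix_inv S) = mat 1"
    using arg_cong[OF i(2), of transpose] assms(1) by (simp add: matrix_transpose_mul)
  then have "matrix_inv S ** (S ** transpose (matrix_inv S)) = matrix_inv S" by simp
  then show ?thesis by (simp add: matrix_mul_assoc i)
qed

lemma det_row_axis:
  fixes S :: "real^'n^'n"
  assumes "transpose S = S" "invertible S"
  shows "det (\<chi> j. if j = i then axis k 1 else S$j) = matrix_inv S $ i $ k * det S"
proof -
  have i: "S ** matrix_inv S = mat 1" using invertible_inv[OF assms(2)] by auto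
  define x where "x = matrix_inv S *v axis k 1"
  have Sx: "S *v x = axis k 1" by (simp add: x_def matrix_vector_mul_assoc i)
  have c1: "det (\<chi> a b. if b = i then (S *v x)$a else S$a$b) = x$i * det S"
    by (rule cramer_lemma)
  have c2: "transpose (\<chi> a b. if b = i then (S *v x)$a else S$a$b) = (\<chi> j. if j = i then axis k 1 else S$j)"
  proof -
    have symr: "S$a$b = S$b$a" for a b
    proof -
      have "transpose S $ a $ b = S $ b $ a" by (simp add: transpose_def)
      then show ?thesis using assms(1) by simp
    qed
    show ?thesis by (simp add: Sx transpose_def vec_eq_iff) (use symr in blast)
  qed
  have "det (\<chi> j. if j = i then axis k 1 else S$j) = x$i * det S"
    unfolding c2[symmetric] det_transpose c1 ..
  moreover have "x$i = matrix_inv S $ i $ k"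
  proof -
    have "x$i = (\<Sum>j\<in>UNIV. matrix_inv S $ i $ j * (if j = k then 1 else 0))"
      by (simp add: x_def matrix_vector_mult_def axis_def)
    also have "\<dots> = (\<Sum>j\<in>UNIV. if j = k then matrix_inv S $ i $ j else 0)"
      by (rule sum.cong) auto
    finally show ?thesis by simp
  qed
  ultimately show ?thesis by simp
qed

lemma det_leibniz_row:
  fixes S :: "real^'n^'n"
  shows "det (\<chi> j. if j = i then h else S$j) =
     (\<Sum>p\<in>{p. p permutes UNIV}. of_int (sign p) * (h $ p i * (\<Prod>j\<in>UNIV - {i}. S$j$p j)))"
proof -
  have "\<And>p. (\<Prod>j\<in>UNIV. (\<chi> j. if j = i then h else S$j)$j$p j) = h $ p i * (\<Prod>j\<in>UNIV - {i}. S$j$p j)"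
  proof -
    fix p
    have "(\<Prod>j\<in>UNIV. (\<chi> j. if j = i then h else S$j)$j$p j) = (\<chi> j. if j = i then h else S$j)$i$p i * (\<Prod>j\<in>UNIV - {i}. (\<chi> j. if j = i then h else S$j)$j$p j)"
      by (rule prod.remove) auto
    also have "(\<Prod>j\<in>UNIV - {i}. (\<chi> j. if j = i then h else S$j)$j$p j) = (\<Prod>j\<in>UNIV - {i}. S$j$p j)"
      by (rule prod.cong) auto
    finally show "?thesis p" by simp
  qed
  then show ?thesis unfolding det_def by simp
qed

lemma det_has_derivative:
  fixes S :: "real^'n^'n"
  assumes "transpose S = S" "invertible S"
  shows "(det has_derivative (\<lambda>H. det S * (\<Sum>i\<in>UNIV. \<Sum>j\<in>UNIV. matrix_inv S $ i $ j * H $ i $ j))) (at S within X)"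
proof -
  have comp: "((\<lambda>A::real^'n^'n. A$i$k) has_derivative (\<lambda>H. H$i$k)) (at A within X)" for i k A
  proof -
    have "bounded_linear (\<lambda>H::real^'n^'n. H$i$k)"
      using bounded_linear_compose[OF bounded_linear_vec_nth bounded_linear_vec_nth] .
    then show ?thesis by (rule bounded_linear_imp_has_derivative)
  qed
  have d1: "(det has_derivative (\<lambda>H. \<Sum>p\<in>{p. p permutes UNIV}. of_int (sign p) *
        (\<Sum>i\<in>UNIV. H$i$p i * (\<Prod>j\<in>UNIV - {i}. S$j$p j)))) (at S within X)"
    unfolding det_def[abs_def]
    by (intro has_derivative_sum has_derivative_mult_right has_derivative_prod comp)
  show ?thesis
  proof (rule has_derivative_eq_rhs[OF d1], rule ext)
    fix H :: "real^'n^'n"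
    have "(\<Sum>p\<in>{p. p permutes UNIV}. of_int (sign p) * (\<Sum>i\<in>UNIV. H$i$p i * (\<Prod>j\<in>UNIV - {i}. S$j$p j)))
      = (\<Sum>i\<in>UNIV. \<Sum>k\<in>UNIV. H$i$k * (\<Sum>p\<in>{p. p permutes UNIV}. of_int (sign p) * (axis k 1 $ p i * (\<Prod>j\<in>UNIV - {i}. S$j$p j))))"
    proof -
      have "\<And>p i. H$i$p i = (\<Sum>k\<in>UNIV. H$i$k * axis k 1 $ p i)"
      proof -
        fix p :: "'n \<Rightarrow> 'n" and i
        have "(\<Sum>k\<in>UNIV. H$i$k * axis k 1 $ p i) = (\<Sum>k\<in>UNIV. if k = p i then H$i$k else 0)"
          by (rule sum.cong) (auto simp: axis_def)
        then show "H$i$p i = (\<Sum>k\<in>UNIV. H$i$k * axis k 1 $ p i)" by simp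
      qed
      then have "(\<Sum>p\<in>{p. p permutes UNIV}. of_int (sign p) * (\<Sum>i\<in>UNIV. H$i$p i * (\<Prod>j\<in>UNIV - {i}. S$j$p j)))
        = (\<Sum>p\<in>{p. p permutes UNIV}. \<Sum>i\<in>UNIV. \<Sum>k\<in>UNIV. H$i$k * (of_int (sign p) * (axis k 1 $ p i * (\<Prod>j\<in>UNIV - {i}. S$j$p j))))"
        by (simp add: sum_distrib_left sum_distrib_right mult_ac)
      also have "\<dots> = (\<Sum>i\<in>UNIV. \<Sum>k\<in>UNIV. \<Sum>p\<in>{p. p permutes UNIV}. H$i$k * (of_int (sign p) * (axis k 1 $ p i * (\<Prod>j\<in>UNIV - {i}. S$j$p j))))"
        by (subst sum.swap) (simp add: sum.swap[of _ "{p. p permutes UNIV}"])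
      finally show ?thesis by (simp add: sum_distrib_left)
    qed
    also have "\<dots> = (\<Sum>i\<in>UNIV. \<Sum>k\<in>UNIV. H$i$k * (matrix_inv S $ i $ k * det S))"
      by (simp add: det_leibniz_row[symmetric] det_row_axis[OF assms])
    also have "\<dots> = det S * (\<Sum>i\<in>UNIV. \<Sum>j\<in>UNIV. matrix_inv S $ i $ j * H $ i $ j)"
      by (simp add: sum_distrib_left mult_ac)
    finally show "(\<Sum>p\<in>{p. p permutes UNIV}. of_int (sign p) * (\<Sum>i\<in>UNIV. H$i$p i * (\<Prod>j\<in>UNIV - {i}. S$j$p j)))
       = det S * (\<Sum>i\<in>UNIV. \<Sum>j\<in>UNIV. matrix_inv S $ i $ j * H $ i $ j)" .
  qed
qed

locale lqr = prob_space M for M :: "'a measure" +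
  fixes x0 :: "'a \<Rightarrow> real" and wx :: "nat \<Rightarrow> 'a \<Rightarrow> real" and wu xi :: "nat \<Rightarrow> 'a \<Rightarrow> real^'n"
  assumes x0m: "x0 \<in> borel_measurable M" and x0sq: "integrable M (\<lambda>\<omega>. (x0 \<omega>)\<^sup>2)"
    and wxm: "\<And>t. wx t \<in> borel_measurable M" and wum: "\<And>t. wu t \<in> borel_measurable M"
    and xim: "\<And>t. xi t \<in> borel_measurable M"
    and ind: "indep_vars (\<lambda>_. borel) (srcvar x0 wx wu xi) UNIV"
    and wxsq: "\<And>t. integrable M (\<lambda>\<omega>. (wx t \<omega>)\<^sup>2)"
    and wxmean: "\<And>t. (\<integral>\<omega>. wx t \<omega> \<partial>M) = 0" and wxvar: "\<And>t. (\<integral>\<omega>. (wx t \<omega>)\<^sup>2 \<partial>M) = 1"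
    and wusq: "\<And>t i. integrable M (\<lambda>\<omega>. (wu t \<omega> $ i)\<^sup>2)"
    and wumean: "\<And>t i. (\<integral>\<omega>. wu t \<omega> $ i \<partial>M) = 0"
    and wucov: "\<And>t i j. (\<integral>\<omega>. wu t \<omega> $ i * wu t \<omega> $ j \<partial>M) = (if i = j then 1 else 0)"
    and xiind: "\<And>t. indep_vars (\<lambda>_. borel) (\<lambda>i \<omega>. xi t \<omega> $ i) UNIV"
    and xinorm: "\<And>t i. distributed M lborel (\<lambda>\<omega>. xi t \<omega> $ i) std_normal_density"
begin

abbreviation "Zs \<equiv> srcvar x0 wx wu xi"

definition fn_of :: "src set \<Rightarrow> ('a \<Rightarrow> real) \<Rightarrow> bool" where
  "fn_of I f \<longleftrightarrow> (\<exists>G \<in> borel_measurable (PiM I (\<lambda>_. borel)). f = (\<lambda>\<omega>. G (restrict (\<lambda>i. Zs i \<omega>) I)))"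

lemma Zs_meas: "Zs i \<in> borel_measurable M"
  using ind unfolding indep_vars_def by auto

lemma restr_meas: "(\<lambda>\<omega>. restrict (\<lambda>i. Zs i \<omega>) I) \<in> measurable M (PiM I (\<lambda>_. borel))"
  by (rule measurable_restrict) (rule Zs_meas)

lemma fn_of_meas: "fn_of I f \<Longrightarrow> f \<in> borel_measurable M"
  unfolding fn_of_def using restr_meas by (auto intro: measurable_compose)

lemma fn_of_indep:
  assumes "I \<inter> J = {}" "fn_of I f" "fn_of J g"
  shows "indep_var borel f borel g"
proof -
  obtain F where F: "F \<in> borel_measurable (PiM I (\<lambda>_. borel))" "f = (\<lambda>\<omega>. F (restrict (\<lambda>i. Zs i \<omega>) I))"
    using assms(2) unfolding fn_of_def by blast
  obtain G where G: "G \<in> borel_measurable (PiM J (\<lambda>_. borel))" "g = (\<lambda>\<omega>. G (restrict (\<lambda>i. Zs i \<omega>) J))"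
    using assms(3) unfolding fn_of_def by blast
  have "indep_var (PiM I (\<lambda>_. borel)) (\<lambda>\<omega>. restrict (\<lambda>i. Zs i \<omega>) I) (PiM J (\<lambda>_. borel)) (\<lambda>\<omega>. restrict (\<lambda>i. Zs i \<omega>) J)"
    using indep_var_restrict[OF ind assms(1)] by simp
  from indep_var_compose[OF this F(1) G(1)] show ?thesis
    by (simp add: F(2) G(2) comp_def)
qed

lemma fn_of_const: "fn_of I (\<lambda>\<omega>. c)"
  unfolding fn_of_def by (intro bexI[of _ "\<lambda>_. c"]) auto

lemma fn_of_comp:
  assumes "fn_of I f" "\<phi> \<in> borel_measurable borel"
  shows "fn_of I (\<lambda>\<omega>. \<phi> (f \<omega>))"
proof -
  obtain F where F: "F \<in> borel_measurable (PiM I (\<lambda>_. borel))" "f = (\<lambda>\<omega>. F (restrict (\<lambda>i. Zs i \<omega>) I))"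
    using assms(1) unfolding fn_of_def by blast
  show ?thesis unfolding fn_of_def
    by (intro bexI[of _ "\<lambda>y. \<phi> (F y)"]) (auto simp: F(2) intro: measurable_compose[OF F(1) assms(2)])
qed

lemma fn_of_comp2:
  assumes "fn_of I f" "fn_of I g" "(\<lambda>(x,y). \<phi> x y) \<in> borel_measurable (borel \<Otimes>\<^sub>M borel)"
  shows "fn_of I (\<lambda>\<omega>. \<phi> (f \<omega>) (g \<omega>))"
proof -
  obtain F where F: "F \<in> borel_measurable (PiM I (\<lambda>_. borel))" "f = (\<lambda>\<omega>. F (restrict (\<lambda>i. Zs i \<omega>) I))"
    using assms(1) unfolding fn_of_def by blast
  obtain G where G: "G \<in> borel_measurable (PiM I (\<lambda>_. borel))" "g = (\<lambda>\<omega>. G (restrict (\<lambda>i. Zs i \<omega>) I))"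
    using assms(2) unfolding fn_of_def by blast
  have "(\<lambda>y. (F y, G y)) \<in> measurable (PiM I (\<lambda>_. borel)) (borel \<Otimes>\<^sub>M borel)"
    using F(1) G(1) by (rule measurable_Pair)
  from measurable_compose[OF this assms(3)]
  have "(\<lambda>y. \<phi> (F y) (G y)) \<in> borel_measurable (PiM I (\<lambda>_. borel))" by simp
  then show ?thesis unfolding fn_of_def
    by (intro bexI[of _ "\<lambda>y. \<phi> (F y) (G y)"]) (auto simp: F(2) G(2))
qed

lemma fn_of_add: "fn_of I f \<Longrightarrow> fn_of I g \<Longrightarrow> fn_of I (\<lambda>\<omega>. f \<omega> + g \<omega>)"
  by (rule fn_of_comp2[where \<phi>="(+)"]) auto

lemma fn_of_diff: "fn_of I f \<Longrightarrow> fn_of I g \<Longrightarrow> fn_of I (\<lambda>\<omega>. f \<omega> - g \<omega>)"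
  by (rule fn_of_comp2[where \<phi>="(-)"]) auto

lemma fn_of_mult: "fn_of I f \<Longrightarrow> fn_of I g \<Longrightarrow> fn_of I (\<lambda>\<omega>. f \<omega> * g \<omega>)"
  by (rule fn_of_comp2[where \<phi>="(*)"]) auto

lemma fn_of_sum:
  assumes "finite K" "\<And>k. k \<in> K \<Longrightarrow> fn_of I (f k)"
  shows "fn_of I (\<lambda>\<omega>. \<Sum>k\<in>K. f k \<omega>)"
  using assms
proof (induction K rule: finite_induct)
  case empty then show ?case by (simp add: fn_of_const)
next
  case (insert x F)
  then show ?case by (simp add: fn_of_add)
qed

lemma fn_of_mono:
  assumes "I \<subseteq> J" "fn_of I f"
  shows "fn_of J f"
proof -
  obtain F where F: "F \<in> borel_measurable (PiM I (\<lambda>_. borel))" "f = (\<lambda>\<omega>. F (restrict (\<lambda>i. Zs i \<omega>) I))"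
    using assms(2) unfolding fn_of_def by blast
  have "(\<lambda>y. F (restrict y I)) \<in> borel_measurable (PiM J (\<lambda>_. borel))"
    using measurable_restrict_subset[OF assms(1)] F(1) by (rule measurable_compose)
  moreover have "f = (\<lambda>\<omega>. F (restrict (restrict (\<lambda>i. Zs i \<omega>) J) I))"
    using assms(1) by (simp add: F(2) restrict_restrict inf.absorb_iff2)
  ultimately show ?thesis unfolding fn_of_def by (intro bexI[of _ "\<lambda>y. F (restrict y I)"]) auto
qed

lemma comp_meas_PiM: "i \<in> I \<Longrightarrow> (\<lambda>y. y i) \<in> measurable (PiM I (\<lambda>_. borel)) (borel :: (real \<times> (real^'n)) measure)"
  by (rule measurable_component_singleton)

lemma fst_borel: "(fst :: real \<times> (real^'n) \<Rightarrow> real) \<in> borel_measurable borel"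
  by (intro borel_measurable_continuous_onI continuous_intros)

lemma snd_nth_borel: "(\<lambda>p::real \<times> (real^'n). snd p $ k) \<in> borel_measurable borel"
  by (intro borel_measurable_continuous_onI continuous_intros)

lemma fn_of_x0: "Init \<in> I \<Longrightarrow> fn_of I x0"
  unfolding fn_of_def
  by (intro bexI[of _ "\<lambda>y. fst (y Init)"])
     (auto simp: srcvar_def intro: measurable_compose[OF comp_meas_PiM fst_borel])

lemma fn_of_wx: "Wx t \<in> I \<Longrightarrow> fn_of I (wx t)"
  unfolding fn_of_def
  by (intro bexI[of _ "\<lambda>y. fst (y (Wx t))"])
     (auto simp: srcvar_def intro: measurable_compose[OF comp_meas_PiM fst_borel])

lemma fn_of_wu: "Wu t \<in> I \<Longrightarrow> fn_of I (\<lambda>\<omega>. wu t \<omega> $ k)"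
  unfolding fn_of_def
  by (intro bexI[of _ "\<lambda>y. snd (y (Wu t)) $ k"])
     (auto simp: srcvar_def intro: measurable_compose[OF comp_meas_PiM snd_nth_borel])

lemma fn_of_xi: "Xi t \<in> I \<Longrightarrow> fn_of I (\<lambda>\<omega>. xi t \<omega> $ k)"
  unfolding fn_of_def
  by (intro bexI[of _ "\<lambda>y. snd (y (Xi t)) $ k"])
     (auto simp: srcvar_def intro: measurable_compose[OF comp_meas_PiM snd_nth_borel])

end

context lqr begin

definition fnv :: "src set \<Rightarrow> ('a \<Rightarrow> real^'m) \<Rightarrow> bool" where
  "fnv I v \<longleftrightarrow> (\<forall>k. fn_of I (\<lambda>\<omega>. v \<omega> $ k))"

lemma fnv_const: "fnv I (\<lambda>\<omega>. c)"
  unfolding fnv_def by (simp add: fn_of_const)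

lemma fnv_add: "fnv I u \<Longrightarrow> fnv I v \<Longrightarrow> fnv I (\<lambda>\<omega>. u \<omega> + v \<omega>)"
  unfolding fnv_def by (simp add: fn_of_add)

lemma fnv_uminus: "fnv I u \<Longrightarrow> fnv I (\<lambda>\<omega>. - u \<omega>)"
  unfolding fnv_def using fn_of_diff[OF fn_of_const[of I 0]] by simp

lemma fnv_scaleR: "fn_of I f \<Longrightarrow> fnv I v \<Longrightarrow> fnv I (\<lambda>\<omega>. f \<omega> *\<^sub>R v \<omega>)"
  unfolding fnv_def by (simp add: fn_of_mult)

lemma fnv_vmul: "fnv I w \<Longrightarrow> fnv I (\<lambda>\<omega>. w \<omega> v* (D::real^'m^'k))"
  unfolding fnv_def vector_matrix_mult_def
  by (auto intro!: fn_of_sum fn_of_mult fn_of_const)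

lemma fnv_mvmul: "fnv I z \<Longrightarrow> fnv I (\<lambda>\<omega>. (L::real^'m^'k) *v z \<omega>)"
  unfolding fnv_def matrix_vector_mult_def
  by (auto intro!: fn_of_sum fn_of_mult fn_of_const)

lemma fn_of_inner: "fnv I u \<Longrightarrow> fnv I v \<Longrightarrow> fn_of I (\<lambda>\<omega>. (u \<omega> :: real^'m) \<bullet> v \<omega>)"
  unfolding fnv_def inner_vec_def
  by (auto intro!: fn_of_sum fn_of_mult)

lemma fnv_wu: "Wu t \<in> I \<Longrightarrow> fnv I (wu t)"
  unfolding fnv_def by (simp add: fn_of_wu)

lemma fnv_xi: "Xi t \<in> I \<Longrightarrow> fnv I (xi t)"
  unfolding fnv_def by (simp add: fn_of_xi)

definition PAST :: "nat \<Rightarrow> src set" where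
  "PAST t = {i. case i of Init \<Rightarrow> True | Wx s \<Rightarrow> s < t | Wu s \<Rightarrow> s < t | Xi s \<Rightarrow> s < t}"

definition NOW :: "nat \<Rightarrow> src set" where
  "NOW t = {Wx t, Wu t, Xi t}"

lemma PAST_NOW: "PAST t \<inter> NOW t = {}"
  by (auto simp: PAST_def NOW_def)

lemma PAST_mono: "PAST t \<subseteq> PAST (Suc t)"
  by (auto simp: PAST_def split: src.splits)

lemma NOW_PAST: "NOW t \<subseteq> PAST (Suc t)"
  by (auto simp: PAST_def NOW_def)

lemma fn_of_traj: "fn_of (PAST t) (traj A B C D x0 wx wu xi K S t)"
proof (induction t)
  case 0
  show ?case by (simp add: fn_of_x0 PAST_def)
next
  case (Suc t)
  have x: "fn_of (PAST (Suc t)) (traj A B C D x0 wx wu xi K S t)"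
    by (rule fn_of_mono[OF PAST_mono Suc.IH])
  have now: "Wx t \<in> PAST (Suc t)" "Wu t \<in> PAST (Suc t)" "Xi t \<in> PAST (Suc t)"
    using NOW_PAST by (auto simp: NOW_def)
  show ?case
    unfolding traj.simps Let_def act_def
    by (intro fn_of_add fn_of_mult fn_of_const fn_of_wx x fn_of_inner fnv_add fnv_const fnv_vmul
        fnv_wu fnv_uminus fnv_scaleR fnv_mvmul fnv_xi now)
qed

end

lemma abs_le_1_sq: "\<bar>x::real\<bar> \<le> 1 + x\<^sup>2"
proof -
  have "0 \<le> (\<bar>x\<bar> - 1) * (\<bar>x\<bar> - 1)" by simp
  then have "2 * \<bar>x\<bar> \<le> x * x + 1" by (simp add: algebra_simps abs_mult_self_eq)
  moreover have "0 \<le> x * x" by simp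
  ultimately show ?thesis by (simp add: power2_eq_square)
qed

lemma abs_mult_le_sq: "\<bar>x * (y::real)\<bar> \<le> x\<^sup>2 + y\<^sup>2"
proof -
  have "0 \<le> (\<bar>x\<bar> - \<bar>y\<bar>) * (\<bar>x\<bar> - \<bar>y\<bar>)" by simp
  then have "2 * (\<bar>x\<bar> * \<bar>y\<bar>) \<le> x * x + y * y" by (simp add: algebra_simps abs_mult_self_eq)
  moreover have "0 \<le> x * x" "0 \<le> y * y" "0 \<le> \<bar>x\<bar> * \<bar>y\<bar>" by simp_all
  ultimately show ?thesis by (simp only: power2_eq_square abs_mult)
qed

context lqr begin

definition sqi :: "('a \<Rightarrow> real) \<Rightarrow> bool" where
  "sqi f \<longleftrightarrow> f \<in> borel_measurable M \<and> integrable M (\<lambda>\<omega>. (f \<omega>)\<^sup>2)"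

lemma sqi_int: "sqi f \<Longrightarrow> integrable M f"
  unfolding sqi_def
  by (rule Bochner_Integration.integrable_bound[of _ "\<lambda>\<omega>. 1 + (f \<omega>)\<^sup>2"])
     (auto intro!: integrable_add abs_le_1_sq[THEN order_trans])

lemma sqi_mult_int: "sqi f \<Longrightarrow> sqi g \<Longrightarrow> integrable M (\<lambda>\<omega>. f \<omega> * g \<omega>)"
  unfolding sqi_def
  by (rule Bochner_Integration.integrable_bound[of _ "\<lambda>\<omega>. (f \<omega>)\<^sup>2 + (g \<omega>)\<^sup>2"])
     (auto intro!: integrable_add abs_mult_le_sq[THEN order_trans])

lemma sqi_const: "sqi (\<lambda>\<omega>. c)"
  unfolding sqi_def by simp

lemma sqi_add: "sqi f \<Longrightarrow> sqi g \<Longrightarrow> sqi (\<lambda>\<omega>. f \<omega> + g \<omega>)"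
proof -
  assume a: "sqi f" "sqi g"
  have "(\<lambda>\<omega>. (f \<omega> + g \<omega>)\<^sup>2) = (\<lambda>\<omega>. (f \<omega>)\<^sup>2 + (2 * (f \<omega> * g \<omega>) + (g \<omega>)\<^sup>2))"
    by (rule ext) (simp add: power2_sum algebra_simps)
  moreover have "integrable M \<dots>"
    using a sqi_mult_int[OF a] unfolding sqi_def
    by (auto intro!: Bochner_Integration.integrable_add Bochner_Integration.integrable_mult_right)
  ultimately show ?thesis using a unfolding sqi_def by auto
qed

lemma sqi_cmult: "sqi f \<Longrightarrow> sqi (\<lambda>\<omega>. c * f \<omega>)"
proof -
  assume a: "sqi f"
  have "(\<lambda>\<omega>. (c * f \<omega>)\<^sup>2) = (\<lambda>\<omega>. c\<^sup>2 * (f \<omega>)\<^sup>2)" by (simp add: power_mult_distrib)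
  then show ?thesis using a unfolding sqi_def by auto
qed

lemma sqi_neg: "sqi f \<Longrightarrow> sqi (\<lambda>\<omega>. - f \<omega>)"
  using sqi_cmult[of f "-1"] by simp

lemma sqi_diff: "sqi f \<Longrightarrow> sqi g \<Longrightarrow> sqi (\<lambda>\<omega>. f \<omega> - g \<omega>)"
  using sqi_add[of f "\<lambda>\<omega>. - g \<omega>"] sqi_neg[of g] by simp

lemma sqi_sum: "finite K \<Longrightarrow> (\<And>k. k \<in> K \<Longrightarrow> sqi (f k)) \<Longrightarrow> sqi (\<lambda>\<omega>. \<Sum>k\<in>K. f k \<omega>)"
  by (induction K rule: finite_induct) (auto simp: sqi_const sqi_add)

lemma sqi_indep_mult:
  fixes f g :: "'a \<Rightarrow> real"
  assumes "indep_var borel f borel g" "sqi f" "sqi g"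
  shows "sqi (\<lambda>\<omega>. f \<omega> * g \<omega>)"
proof -
  have sq: "(\<lambda>x::real. x\<^sup>2) \<in> borel_measurable borel" by simp
  have i: "indep_var borel (\<lambda>\<omega>. (f \<omega>)\<^sup>2) borel (\<lambda>\<omega>. (g \<omega>)\<^sup>2)"
    using indep_var_compose[OF assms(1) sq sq] by (simp add: comp_def)
  have "integrable M (\<lambda>\<omega>. (f \<omega>)\<^sup>2 * (g \<omega>)\<^sup>2)"
    using assms(2,3) unfolding sqi_def by (intro indep_var_integrable[OF i]) auto
  then show ?thesis using assms(2,3) unfolding sqi_def by (simp add: power_mult_distrib borel_measurable_times)
qed

lemma indep_int_mult:
  fixes f g :: "'a \<Rightarrow> real"
  assumes "indep_var borel f borel g" "integrable M f" "integrable M g"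
  shows "integrable M (\<lambda>\<omega>. f \<omega> * g \<omega>)" "(\<integral>\<omega>. f \<omega> * g \<omega> \<partial>M) = (\<integral>\<omega>. f \<omega> \<partial>M) * (\<integral>\<omega>. g \<omega> \<partial>M)"
  using indep_var_integrable[OF assms] indep_var_lebesgue_integral[OF assms] by auto

lemma sqi_x0: "sqi x0" using x0m x0sq by (simp add: sqi_def)
lemma sqi_wx: "sqi (wx t)" using wxm wxsq by (simp add: sqi_def)
lemma sqi_wu: "sqi (\<lambda>\<omega>. wu t \<omega> $ i)" using fn_of_meas[OF fn_of_wu[of t UNIV i]] wusq by (simp add: sqi_def)

lemma xi_facts:
  shows "sqi (\<lambda>\<omega>. xi t \<omega> $ k)" "(\<integral>\<omega>. xi t \<omega> $ k \<partial>M) = 0" "(\<integral>\<omega>. (xi t \<omega> $ k)\<^sup>2 \<partial>M) = 1"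
proof -
  have D: "distributed M lborel (\<lambda>\<omega>. xi t \<omega> $ k) std_normal_density" by (rule xinorm)
  have m: "(\<lambda>\<omega>. xi t \<omega> $ k) \<in> borel_measurable M" using fn_of_meas[OF fn_of_xi[of t UNIV k]] by simp
  have "integrable lborel (\<lambda>x. std_normal_density x * x ^ 2)" by (rule integrable_std_normal_moment)
  then have "integrable M (\<lambda>\<omega>. (xi t \<omega> $ k)^2)"
    using distributed_integrable[OF D, of "\<lambda>x. x^2"] by (simp add: normal_density_nonneg)
  then show "sqi (\<lambda>\<omega>. xi t \<omega> $ k)" using m by (simp add: sqi_def)
  show e: "(\<integral>\<omega>. xi t \<omega> $ k \<partial>M) = 0" using standard_normal_distributed_expectation[OF D] by simp
  show "(\<integral>\<omega>. (xi t \<omega> $ k)\<^sup>2 \<partial>M) = 1" using standard_normal_distributed_variance[OF D] e by simp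
qed

lemma xi_cov: "(\<integral>\<omega>. xi t \<omega> $ k * xi t \<omega> $ l \<partial>M) = (if k = l then 1 else 0)"
proof (cases "k = l")
  case True then show ?thesis using xi_facts(3)[of t k] by (simp add: power2_eq_square)
next
  case False
  have "indep_var (PiM {k} (\<lambda>_. borel)) (\<lambda>\<omega>. restrict (\<lambda>i. xi t \<omega> $ i) {k})
     (PiM {l} (\<lambda>_. borel)) (\<lambda>\<omega>. restrict (\<lambda>i. xi t \<omega> $ i) {l})"
    using False by (intro indep_var_restrict[OF xiind]) auto
  from indep_var_compose[OF this measurable_component_singleton measurable_component_singleton]
  have "indep_var borel (\<lambda>\<omega>. xi t \<omega> $ k) borel (\<lambda>\<omega>. xi t \<omega> $ l)"
    by (simp add: comp_def)
  from indep_int_mult(2)[OF this sqi_int[OF xi_facts(1)] sqi_int[OF xi_facts(1)]]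
  show ?thesis using False xi_facts(2) by simp
qed

end

context lqr begin

lemma ON_prod:
  fixes r :: "'j \<Rightarrow> 'a \<Rightarrow> real"
  assumes J: "finite J" and sq: "\<And>j. j\<in>J \<Longrightarrow> sqi (r j)" and m0: "\<And>j. j\<in>J \<Longrightarrow> (\<integral>\<omega>. r j \<omega> \<partial>M) = 0"
    and cov: "\<And>j k. j\<in>J \<Longrightarrow> k\<in>J \<Longrightarrow> (\<integral>\<omega>. r j \<omega> * r k \<omega> \<partial>M) = (if j = k then 1 else 0)"
  shows "integrable M (\<lambda>\<omega>. (\<alpha> + (\<Sum>j\<in>J. \<beta> j * r j \<omega>)) * (\<alpha>' + (\<Sum>j\<in>J. \<beta>' j * r j \<omega>)))"
    and "(\<integral>\<omega>. (\<alpha> + (\<Sum>j\<in>J. \<beta> j * r j \<omega>)) * (\<alpha>' + (\<Sum>j\<in>J. \<beta>' j * r j \<omega>)) \<partial>M) = \<alpha> * \<alpha>' + (\<Sum>j\<in>J. \<beta> j * \<beta>' j)"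
proof -
  have eq: "(\<lambda>\<omega>. (\<alpha> + (\<Sum>j\<in>J. \<beta> j * r j \<omega>)) * (\<alpha>' + (\<Sum>j\<in>J. \<beta>' j * r j \<omega>))) =
    (\<lambda>\<omega>. \<alpha> * \<alpha>' + ((\<Sum>j\<in>J. (\<alpha> * \<beta>' j) * r j \<omega>) + ((\<Sum>j\<in>J. (\<alpha>' * \<beta> j) * r j \<omega>) +
       (\<Sum>j\<in>J. \<Sum>k\<in>J. (\<beta> j * \<beta>' k) * (r j \<omega> * r k \<omega>)))))"
  proof (rule ext)
    fix \<omega>
    have p: "(\<Sum>j\<in>J. \<beta> j * r j \<omega>) * (\<Sum>k\<in>J. \<beta>' k * r k \<omega>) = (\<Sum>j\<in>J. \<Sum>k\<in>J. (\<beta> j * \<beta>' k) * (r j \<omega> * r k \<omega>))"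
      by (simp add: sum_product mult_ac)
    have q: "\<alpha> * (\<Sum>j\<in>J. \<beta>' j * r j \<omega>) = (\<Sum>j\<in>J. (\<alpha> * \<beta>' j) * r j \<omega>)"
      "(\<Sum>j\<in>J. \<beta> j * r j \<omega>) * \<alpha>' = (\<Sum>j\<in>J. (\<alpha>' * \<beta> j) * r j \<omega>)"
      by (simp_all add: sum_distrib_left sum_distrib_right mult_ac)
    show "(\<alpha> + (\<Sum>j\<in>J. \<beta> j * r j \<omega>)) * (\<alpha>' + (\<Sum>j\<in>J. \<beta>' j * r j \<omega>)) =
      \<alpha> * \<alpha>' + ((\<Sum>j\<in>J. (\<alpha> * \<beta>' j) * r j \<omega>) + ((\<Sum>j\<in>J. (\<alpha>' * \<beta> j) * r j \<omega>) +
       (\<Sum>j\<in>J. \<Sum>k\<in>J. (\<beta> j * \<beta>' k) * (r j \<omega> * r k \<omega>))))"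
      unfolding distrib_left distrib_right p[symmetric] q[symmetric] by simp
  qed
  have ir: "\<And>j. j \<in> J \<Longrightarrow> integrable M (r j)" using sq sqi_int by blast
  have irr: "\<And>j k. j \<in> J \<Longrightarrow> k \<in> J \<Longrightarrow> integrable M (\<lambda>\<omega>. r j \<omega> * r k \<omega>)" using sq sqi_mult_int by blast
  have i1: "integrable M (\<lambda>\<omega>. \<Sum>j\<in>J. (c j) * r j \<omega>)" for c
    using ir by (intro Bochner_Integration.integrable_sum Bochner_Integration.integrable_mult_right) auto
  have i2: "integrable M (\<lambda>\<omega>. \<Sum>j\<in>J. \<Sum>k\<in>J. (\<beta> j * \<beta>' k) * (r j \<omega> * r k \<omega>))"
    using irr by (intro Bochner_Integration.integrable_sum Bochner_Integration.integrable_mult_right) auto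
  show "integrable M (\<lambda>\<omega>. (\<alpha> + (\<Sum>j\<in>J. \<beta> j * r j \<omega>)) * (\<alpha>' + (\<Sum>j\<in>J. \<beta>' j * r j \<omega>)))"
    unfolding eq using i1 i2 by (intro Bochner_Integration.integrable_add) auto
  have e1: "(\<integral>\<omega>. (\<Sum>j\<in>J. (c j) * r j \<omega>) \<partial>M) = 0" for c
    using ir m0 by (subst Bochner_Integration.integral_sum) auto
  have e2: "(\<integral>\<omega>. (\<Sum>j\<in>J. \<Sum>k\<in>J. (\<beta> j * \<beta>' k) * (r j \<omega> * r k \<omega>)) \<partial>M) = (\<Sum>j\<in>J. \<beta> j * \<beta>' j)"
  proof -
    have "(\<integral>\<omega>. (\<Sum>j\<in>J. \<Sum>k\<in>J. (\<beta> j * \<beta>' k) * (r j \<omega> * r k \<omega>)) \<partial>M)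
       = (\<Sum>j\<in>J. \<Sum>k\<in>J. (\<beta> j * \<beta>' k) * (if j = k then 1 else 0))"
      using irr cov by (simp add: Bochner_Integration.integral_sum Bochner_Integration.integrable_sum)
    also have "\<dots> = (\<Sum>j\<in>J. \<beta> j * \<beta>' j)"
      using J by (simp add: if_distrib cong: if_cong)
    finally show ?thesis .
  qed
  show "(\<integral>\<omega>. (\<alpha> + (\<Sum>j\<in>J. \<beta> j * r j \<omega>)) * (\<alpha>' + (\<Sum>j\<in>J. \<beta>' j * r j \<omega>)) \<partial>M) = \<alpha> * \<alpha>' + (\<Sum>j\<in>J. \<beta> j * \<beta>' j)"
    unfolding eq using i1 i2 e1 e2 by (simp add: Bochner_Integration.integral_add Bochner_Integration.integrable_add prob_space)
qed

lemma RL: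
  assumes J: "finite J" and WZ: "W \<inter> Z = {}"
    and c: "\<And>j. j\<in>J \<Longrightarrow> fn_of W (c j)" "\<And>j. j\<in>J \<Longrightarrow> integrable M (c j)"
    and z: "\<And>j. j\<in>J \<Longrightarrow> fn_of Z (z j)" "\<And>j. j\<in>J \<Longrightarrow> integrable M (z j)" "\<And>j. j\<in>J \<Longrightarrow> (\<integral>\<omega>. z j \<omega> \<partial>M) = 0"
  shows "integrable M (\<lambda>\<omega>. \<Sum>j\<in>J. c j \<omega> * z j \<omega>)" "(\<integral>\<omega>. (\<Sum>j\<in>J. c j \<omega> * z j \<omega>) \<partial>M) = 0"
proof -
  have i: "indep_var borel (c j) borel (z j)" if "j \<in> J" for j
    using fn_of_indep[OF WZ c(1)[OF that] z(1)[OF that]] .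
  show "integrable M (\<lambda>\<omega>. \<Sum>j\<in>J. c j \<omega> * z j \<omega>)"
    using indep_int_mult(1)[OF i] c(2) z(2) by (intro Bochner_Integration.integrable_sum) auto
  show "(\<integral>\<omega>. (\<Sum>j\<in>J. c j \<omega> * z j \<omega>) \<partial>M) = 0"
    using indep_int_mult[OF i] c(2) z(2) z(3) by (subst Bochner_Integration.integral_sum) auto
qed

lemma RC:
  assumes J: "finite J" and WZ: "W \<inter> Z = {}"
    and c: "\<And>j. j\<in>J \<Longrightarrow> fn_of W (c j)" "\<And>j. j\<in>J \<Longrightarrow> sqi (c j)"
    and z: "\<And>j. j\<in>J \<Longrightarrow> fn_of Z (z j)" "\<And>j. j\<in>J \<Longrightarrow> sqi (z j)"
       "\<And>j k. j\<in>J \<Longrightarrow> k\<in>J \<Longrightarrow> (\<integral>\<omega>. z j \<omega> * z k \<omega> \<partial>M) = (if j = k then 1 else 0)"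
  shows "integrable M (\<lambda>\<omega>. (\<Sum>j\<in>J. c j \<omega> * z j \<omega>)\<^sup>2)"
    "(\<integral>\<omega>. (\<Sum>j\<in>J. c j \<omega> * z j \<omega>)\<^sup>2 \<partial>M) = (\<Sum>j\<in>J. \<integral>\<omega>. (c j \<omega>)\<^sup>2 \<partial>M)"
proof -
  have eq: "(\<lambda>\<omega>. (\<Sum>j\<in>J. c j \<omega> * z j \<omega>)\<^sup>2) = (\<lambda>\<omega>. \<Sum>j\<in>J. \<Sum>k\<in>J. (c j \<omega> * c k \<omega>) * (z j \<omega> * z k \<omega>))"
    by (rule ext) (simp add: power2_eq_square sum_product mult_ac)
  have i: "indep_var borel (\<lambda>\<omega>. c j \<omega> * c k \<omega>) borel (\<lambda>\<omega>. z j \<omega> * z k \<omega>)" if "j \<in> J" "k \<in> J" for j k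
    using that by (intro fn_of_indep[OF WZ] fn_of_mult c z)
  have ic: "integrable M (\<lambda>\<omega>. c j \<omega> * c k \<omega>)" "integrable M (\<lambda>\<omega>. z j \<omega> * z k \<omega>)" if "j \<in> J" "k \<in> J" for j k
    using that c(2) z(2) by (auto intro: sqi_mult_int)
  show "integrable M (\<lambda>\<omega>. (\<Sum>j\<in>J. c j \<omega> * z j \<omega>)\<^sup>2)"
    unfolding eq using indep_int_mult(1)[OF i ic] by (intro Bochner_Integration.integrable_sum) auto
  have "(\<integral>\<omega>. (\<Sum>j\<in>J. c j \<omega> * z j \<omega>)\<^sup>2 \<partial>M) = (\<Sum>j\<in>J. \<Sum>k\<in>J. (\<integral>\<omega>. c j \<omega> * c k \<omega> \<partial>M) * (if j = k then 1 else 0))"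
    unfolding eq using indep_int_mult[OF i ic] z(3) by (simp add: Bochner_Integration.integral_sum Bochner_Integration.integrable_sum)
  also have "\<dots> = (\<Sum>j\<in>J. \<integral>\<omega>. (c j \<omega>)\<^sup>2 \<partial>M)"
    using J by (simp add: if_distrib power2_eq_square cong: if_cong)
  finally show "(\<integral>\<omega>. (\<Sum>j\<in>J. c j \<omega> * z j \<omega>)\<^sup>2 \<partial>M) = (\<Sum>j\<in>J. \<integral>\<omega>. (c j \<omega>)\<^sup>2 \<partial>M)" .
qed

end

definition tr2 :: "real^'n^'n \<Rightarrow> real^'n^'n \<Rightarrow> real" where
  "tr2 G S = (\<Sum>i\<in>UNIV. \<Sum>j\<in>UNIV. G$i$j * S$i$j)"

lemma sum_swap3: "(\<Sum>i\<in>A. \<Sum>j\<in>B. \<Sum>m\<in>C. f i j m) = (\<Sum>m\<in>C. \<Sum>i\<in>A. \<Sum>j\<in>B. f i j m)"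
proof -
  have "(\<Sum>i\<in>A. \<Sum>j\<in>B. \<Sum>m\<in>C. f i j m) = (\<Sum>i\<in>A. \<Sum>m\<in>C. \<Sum>j\<in>B. f i j m)"
    by (rule sum.cong[OF refl], rule sum.swap)
  also have "\<dots> = (\<Sum>m\<in>C. \<Sum>i\<in>A. \<Sum>j\<in>B. f i j m)" by (rule sum.swap)
  finally show ?thesis .
qed

lemma sum_option: "(\<Sum>j\<in>(UNIV::'n::finite option set). f j) = f None + (\<Sum>m\<in>UNIV. f (Some m))"
proof -
  have "(\<Sum>j\<in>(UNIV::'n option set). f j) = (\<Sum>j\<in>insert None (range Some). f j)"
    by (simp only: UNIV_option_conv)
  also have "\<dots> = f None + (\<Sum>j\<in>range Some. f j)"
    by (rule sum.insert) (auto intro: finite_imageI)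
  also have "(\<Sum>j\<in>range Some. f j) = (\<Sum>m\<in>UNIV. f (Some m))"
    by (subst sum.reindex) (auto simp: inj_on_def)
  finally show ?thesis .
qed

lemma KMK: "K \<bullet> (Mmat B D *v K) = (B \<bullet> K)\<^sup>2 + (\<Sum>m\<in>UNIV. ((D *v K) $ m)\<^sup>2)"
proof -
  have "K \<bullet> (Mmat B D *v K) = (\<Sum>i\<in>UNIV. \<Sum>j\<in>UNIV. K$i * (B$i*B$j + (\<Sum>m\<in>UNIV. D$m$i * D$m$j)) * K$j)"
    by (simp add: inner_mv Mmat_def matrix_matrix_mult_def transpose_def)
  also have "\<dots> = (\<Sum>i\<in>UNIV. \<Sum>j\<in>UNIV. (K$i*B$i)*(B$j*K$j)) + (\<Sum>i\<in>UNIV. \<Sum>j\<in>UNIV. \<Sum>m\<in>UNIV. (D$m$i*K$i) * (D$m$j * K$j))"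
  proof -
    have "K$i * (B$i*B$j + (\<Sum>m\<in>UNIV. D$m$i * D$m$j)) * K$j = (K$i*B$i)*(B$j*K$j) + (\<Sum>m\<in>UNIV. (D$m$i*K$i) * (D$m$j*K$j))" for i j
      by (simp add: algebra_simps sum_distrib_left sum_distrib_right)
    then show ?thesis by (simp add: sum.distrib)
  qed
  also have "\<dots> = (\<Sum>i\<in>UNIV. \<Sum>j\<in>UNIV. (K$i*B$i)*(B$j*K$j)) + (\<Sum>m\<in>UNIV. \<Sum>i\<in>UNIV. \<Sum>j\<in>UNIV. (D$m$i*K$i) * (D$m$j * K$j))"
    by (subst sum_swap3) (rule refl)
  also have "\<dots> = (B \<bullet> K)\<^sup>2 + (\<Sum>m\<in>UNIV. ((D *v K) $ m)\<^sup>2)"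
    by (simp add: power2_eq_square inner_vec_def matrix_vector_mult_def sum_product mult_ac)
  finally show ?thesis .
qed

context lqr begin

lemma wx_wu_indep: "(\<integral>\<omega>. wx t \<omega> * wu t \<omega> $ m \<partial>M) = 0"
proof -
  have "indep_var borel (wx t) borel (\<lambda>\<omega>. wu t \<omega> $ m)"
    by (rule fn_of_indep[of "{Wx t}" "{Wu t}"]) (auto intro: fn_of_wx fn_of_wu)
  from indep_int_mult(2)[OF this sqi_int[OF sqi_wx] sqi_int[OF sqi_wu]]
  show ?thesis by (simp add: wxmean)
qed

lemma a_moment:
  fixes A C :: real and B K :: "real^'n" and D :: "real^'n^'n"
  shows "sqi (\<lambda>\<omega>. A + wx t \<omega> * C - (B + wu t \<omega> v* D) \<bullet> K)"
    "(\<integral>\<omega>. (A + wx t \<omega> * C - (B + wu t \<omega> v* D) \<bullet> K)\<^sup>2 \<partial>M) = VK A B C D K"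
proof -
  define v where "v = D *v K"
  define r :: "'n option \<Rightarrow> 'a \<Rightarrow> real" where "r j = (case j of None \<Rightarrow> wx t | Some m \<Rightarrow> (\<lambda>\<omega>. wu t \<omega> $ m))" for j
  define \<beta> :: "'n option \<Rightarrow> real" where "\<beta> j = (case j of None \<Rightarrow> C | Some m \<Rightarrow> - v $ m)" for j
  have eq: "(\<lambda>\<omega>. A + wx t \<omega> * C - (B + wu t \<omega> v* D) \<bullet> K) = (\<lambda>\<omega>. (A - B \<bullet> K) + (\<Sum>j\<in>UNIV. \<beta> j * r j \<omega>))"
  proof (rule ext)
    fix \<omega>
    have "(wu t \<omega> v* D) \<bullet> K = wu t \<omega> \<bullet> v"
      unfolding v_def by (rule dot_lmul_matrix)
    then have "(wu t \<omega> v* D) \<bullet> K = (\<Sum>m\<in>UNIV. wu t \<omega> $ m * v $ m)"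
      by (simp add: inner_vec_def)
    then show "A + wx t \<omega> * C - (B + wu t \<omega> v* D) \<bullet> K = (A - B \<bullet> K) + (\<Sum>j\<in>UNIV. \<beta> j * r j \<omega>)"
      by (simp add: sum_option r_def \<beta>_def inner_add_left sum_negf algebra_simps)
  qed
  have sq: "sqi (r j)" for j by (cases j) (auto simp: r_def sqi_wx sqi_wu)
  have m0: "(\<integral>\<omega>. r j \<omega> \<partial>M) = 0" for j by (cases j) (auto simp: r_def wxmean wumean)
  have cov: "(\<integral>\<omega>. r j \<omega> * r k \<omega> \<partial>M) = (if j = k then 1 else 0)" for j k
    by (cases j; cases k) (auto simp: r_def wucov wx_wu_indep wxvar[unfolded power2_eq_square] mult.commute[of "wu t _ $ _" "wx t _"])
  note on = ON_prod[of UNIV r "A - B \<bullet> K" \<beta> "A - B \<bullet> K" \<beta>, OF _ sq m0 cov]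
  have meas: "(\<lambda>\<omega>. A + wx t \<omega> * C - (B + wu t \<omega> v* D) \<bullet> K) \<in> borel_measurable M"
  proof -
    have rm[measurable]: "r j \<in> borel_measurable M" for j using sq[of j] by (simp add: sqi_def)
    show ?thesis unfolding eq by measurable
  qed
  show "sqi (\<lambda>\<omega>. A + wx t \<omega> * C - (B + wu t \<omega> v* D) \<bullet> K)"
    using meas on(1) unfolding eq sqi_def by (simp add: power2_eq_square)
  have "(\<integral>\<omega>. (A + wx t \<omega> * C - (B + wu t \<omega> v* D) \<bullet> K)\<^sup>2 \<partial>M) = (A - B \<bullet> K) * (A - B \<bullet> K) + (\<Sum>j\<in>UNIV. \<beta> j * \<beta> j)"
    using on(2) by (simp only: power2_eq_square fun_cong[OF eq]) simp
  also have "\<dots> = VK A B C D K"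
    by (simp add: VK_def KMK sum_option \<beta>_def v_def power2_eq_square algebra_simps)
  finally show "(\<integral>\<omega>. (A + wx t \<omega> * C - (B + wu t \<omega> v* D) \<bullet> K)\<^sup>2 \<partial>M) = VK A B C D K" .
qed

end

context lqr begin

definition Yf :: "nat \<Rightarrow> real^'n \<Rightarrow> real^'n^'n \<Rightarrow> 'n \<Rightarrow> 'a \<Rightarrow> real" where
  "Yf t B D i \<omega> = B$i + (\<Sum>m\<in>UNIV. D$m$i * wu t \<omega> $ m)"

definition cf :: "nat \<Rightarrow> real^'n \<Rightarrow> real^'n^'n \<Rightarrow> real^'n^'n \<Rightarrow> 'n \<Rightarrow> 'a \<Rightarrow> real" where
  "cf t B D L k \<omega> = (\<Sum>i\<in>UNIV. L$i$k * Yf t B D i \<omega>)"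

lemma Y_moment:
  shows "sqi (Yf t B D i)"
    "(\<integral>\<omega>. Yf t B D i \<omega> * Yf t B D j \<omega> \<partial>M) = B$i*B$j + (\<Sum>m\<in>UNIV. D$m$i * D$m$j)"
proof -
  have sq: "sqi (\<lambda>\<omega>. wu t \<omega> $ m)" for m by (rule sqi_wu)
  have m0: "(\<integral>\<omega>. wu t \<omega> $ m \<partial>M) = 0" for m by (rule wumean)
  have cov: "(\<integral>\<omega>. wu t \<omega> $ m * wu t \<omega> $ m' \<partial>M) = (if m = m' then 1 else 0)" for m m' by (rule wucov)
  note on = ON_prod[of UNIV "\<lambda>m \<omega>. wu t \<omega> $ m", OF _ sq m0 cov, simplified]
  have meas: "Yf t B D i \<in> borel_measurable M"
    using fn_of_meas[OF fn_of_wu[of t UNIV]] unfolding Yf_def by measurable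
  show "sqi (Yf t B D i)"
    using meas on(1)[of "B$i" "\<lambda>m. D$m$i" "B$i" "\<lambda>m. D$m$i"]
    unfolding sqi_def Yf_def by (simp add: power2_eq_square)
  show "(\<integral>\<omega>. Yf t B D i \<omega> * Yf t B D j \<omega> \<partial>M) = B$i*B$j + (\<Sum>m\<in>UNIV. D$m$i * D$m$j)"
    using on(2) unfolding Yf_def by simp
qed

lemma fn_of_Yf: "Wu t \<in> W \<Longrightarrow> fn_of W (Yf t B D i)"
  unfolding Yf_def by (intro fn_of_add fn_of_const fn_of_sum fn_of_mult fn_of_wu) auto

lemma fn_of_cf: "Wu t \<in> W \<Longrightarrow> fn_of W (cf t B D L k)"
  unfolding cf_def by (intro fn_of_sum fn_of_mult fn_of_const fn_of_Yf) auto

lemma sqi_cf: "sqi (cf t B D L k)"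
  unfolding cf_def by (intro sqi_sum sqi_cmult Y_moment(1)) auto

lemma c_moment:
  "(\<Sum>k\<in>UNIV. \<integral>\<omega>. (cf t B D L k \<omega>)\<^sup>2 \<partial>M) = tr2 (Mmat B D) (L ** transpose L)"
proof -
  have iY: "integrable M (\<lambda>\<omega>. Yf t B D i \<omega> * Yf t B D j \<omega>)" for i j
    by (intro sqi_mult_int Y_moment(1))
  have "(\<integral>\<omega>. (cf t B D L k \<omega>)\<^sup>2 \<partial>M) = (\<integral>\<omega>. (\<Sum>i\<in>UNIV. \<Sum>j\<in>UNIV. (L$i$k * L$j$k) * (Yf t B D i \<omega> * Yf t B D j \<omega>)) \<partial>M)" for k
    unfolding cf_def by (simp add: power2_eq_square sum_product mult_ac)
  also have "\<dots> k = (\<Sum>i\<in>UNIV. \<Sum>j\<in>UNIV. (L$i$k * L$j$k) * (B$i*B$j + (\<Sum>m\<in>UNIV. D$m$i * D$m$j)))" for k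
    using iY by (simp add: Bochner_Integration.integral_sum Bochner_Integration.integrable_sum Y_moment(2))
  finally have "(\<Sum>k\<in>UNIV. \<integral>\<omega>. (cf t B D L k \<omega>)\<^sup>2 \<partial>M) =
     (\<Sum>k\<in>UNIV. \<Sum>i\<in>UNIV. \<Sum>j\<in>UNIV. (L$i$k * L$j$k) * (B$i*B$j + (\<Sum>m\<in>UNIV. D$m$i * D$m$j)))"
    by simp
  also have "\<dots> = (\<Sum>i\<in>UNIV. \<Sum>j\<in>UNIV. \<Sum>k\<in>UNIV. (L$i$k * L$j$k) * (B$i*B$j + (\<Sum>m\<in>UNIV. D$m$i * D$m$j)))"
    by (rule sum_swap3[symmetric])
  also have "\<dots> = tr2 (Mmat B D) (L ** transpose L)"
    by (simp add: tr2_def Mmat_def matrix_matrix_mult_def transpose_def sum_distrib_right mult.commute)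
  finally show ?thesis .
qed

end

context lqr begin

lemma traj_step_decomp:
  fixes A C :: real and B K :: "real^'n" and D S :: "real^'n^'n"
  shows "traj A B C D x0 wx wu xi K S (Suc t) \<omega> =
     (A + wx t \<omega> * C - (B + wu t \<omega> v* D) \<bullet> K) * traj A B C D x0 wx wu xi K S t \<omega>
     + (\<Sum>k\<in>UNIV. cf t B D (msqrt S) k \<omega> * xi t \<omega> $ k)"
proof -
  let ?x = "traj A B C D x0 wx wu xi K S t \<omega>"
  let ?Y = "B + wu t \<omega> v* D"
  have "?Y \<bullet> (msqrt S *v xi t \<omega>) = (?Y v* msqrt S) \<bullet> xi t \<omega>"
    by (rule dot_lmul_matrix[symmetric])
  also have "\<dots> = (\<Sum>k\<in>UNIV. cf t B D (msqrt S) k \<omega> * xi t \<omega> $ k)"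
    unfolding inner_vec_def inner_real_def
  proof (rule sum.cong[OF refl])
    fix k :: 'n assume "k \<in> UNIV"
    have "(?Y v* msqrt S) $ k = (\<Sum>i\<in>UNIV. msqrt S $ i $ k * Yf t B D i \<omega>)"
      by (simp add: vector_matrix_mult_def Yf_def mult.commute)
    then show "(?Y v* msqrt S) $ k * xi t \<omega> $ k = cf t B D (msqrt S) k \<omega> * xi t \<omega> $ k"
      by (simp add: cf_def)
  qed
  finally have e: "?Y \<bullet> (msqrt S *v xi t \<omega>) = (\<Sum>k\<in>UNIV. cf t B D (msqrt S) k \<omega> * xi t \<omega> $ k)" .
  have "traj A B C D x0 wx wu xi K S (Suc t) \<omega> = (A + wx t \<omega> * C) * ?x + ?Y \<bullet> (- (?x *\<^sub>R K)) + ?Y \<bullet> (msqrt S *v xi t \<omega>)"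
    by (simp only: traj.simps Let_def act_def inner_add_right[of ?Y] add.assoc)
  also have "\<dots> = (A + wx t \<omega> * C) * ?x - ?x * (?Y \<bullet> K) + (\<Sum>k\<in>UNIV. cf t B D (msqrt S) k \<omega> * xi t \<omega> $ k)"
    by (simp only: e inner_minus_right inner_scaleR_right)
  finally show ?thesis by (simp only: left_diff_distrib mult.commute[of ?x])
qed

lemma step:
  fixes A C :: real and B K :: "real^'n" and D S :: "real^'n^'n"
  assumes LL: "msqrt S ** transpose (msqrt S) = S"
    and sx: "sqi (traj A B C D x0 wx wu xi K S t)"
  shows "sqi (traj A B C D x0 wx wu xi K S (Suc t))"
    "(\<integral>\<omega>. (traj A B C D x0 wx wu xi K S (Suc t) \<omega>)\<^sup>2 \<partial>M) =
       VK A B C D K * (\<integral>\<omega>. (traj A B C D x0 wx wu xi K S t \<omega>)\<^sup>2 \<partial>M) + tr2 (Mmat B D) S"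
proof -
  define X where "X = traj A B C D x0 wx wu xi K S"
  define a where "a \<omega> = A + wx t \<omega> * C - (B + wu t \<omega> v* D) \<bullet> K" for \<omega>
  define c where "c = cf t B D (msqrt S)"
  define z where "z k \<omega> = xi t \<omega> $ k" for k \<omega>
  define b where "b \<omega> = (\<Sum>k\<in>UNIV. c k \<omega> * z k \<omega>)" for \<omega>
  define W where "W = {Wx t, Wu t}"
  have WZ: "W \<inter> {Xi t} = {}" by (simp add: W_def)
  have WN: "W \<subseteq> NOW t" "{Xi t} \<subseteq> NOW t" by (auto simp: W_def NOW_def)
  have dec: "X (Suc t) \<omega> = a \<omega> * X t \<omega> + b \<omega>" for \<omega>
    unfolding X_def a_def b_def c_def z_def by (rule traj_step_decomp)
  have fa: "fn_of W a"
    unfolding a_def W_def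
    by (intro fn_of_diff fn_of_add fn_of_const fn_of_mult fn_of_wx fn_of_inner fnv_add fnv_const fnv_vmul fnv_wu) auto
  have fc: "fn_of W (c k)" for k unfolding c_def W_def by (rule fn_of_cf) auto
  have fz: "fn_of {Xi t} (z k)" for k unfolding z_def by (rule fn_of_xi) auto
  have sa: "sqi a" unfolding a_def by (rule a_moment(1))
  have sc: "sqi (c k)" for k unfolding c_def by (rule sqi_cf)
  have sz: "sqi (z k)" for k unfolding z_def by (rule xi_facts(1))
  have covz: "(\<integral>\<omega>. z j \<omega> * z k \<omega> \<partial>M) = (if j = k then 1 else 0)" for j k unfolding z_def by (rule xi_cov)
  note rc = RC[of UNIV W "{Xi t}" c z, OF _ WZ fc sc fz sz covz, simplified]
  have fb: "fn_of (NOW t) b"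
    unfolding b_def using fn_of_mono[OF WN(1) fc] fn_of_mono[OF WN(2) fz]
    by (intro fn_of_sum fn_of_mult) auto
  have sb: "sqi b" using rc(1) fn_of_meas[OF fb] unfolding sqi_def b_def by simp
  have Eb: "(\<integral>\<omega>. (b \<omega>)\<^sup>2 \<partial>M) = tr2 (Mmat B D) S"
    using rc(2) c_moment[of t B D "msqrt S"] LL unfolding b_def c_def by simp
  have Ea: "(\<integral>\<omega>. (a \<omega>)\<^sup>2 \<partial>M) = VK A B C D K" unfolding a_def by (rule a_moment(2))
  have ab: "(\<lambda>\<omega>. a \<omega> * b \<omega>) = (\<lambda>\<omega>. \<Sum>k\<in>UNIV. (a \<omega> * c k \<omega>) * z k \<omega>)"
    by (simp add: b_def sum_distrib_left mult.assoc)
  note rl = RL[of UNIV W "{Xi t}" "\<lambda>k \<omega>. a \<omega> * c k \<omega>" z, OF _ WZ fn_of_mult[OF fa fc] sqi_mult_int[OF sa sc]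
      fn_of_xi[of t "{Xi t}", folded z_def] sqi_int[OF sz] xi_facts(2)[of t, folded z_def], simplified]
  have Eab: "(\<integral>\<omega>. a \<omega> * b \<omega> \<partial>M) = 0" "integrable M (\<lambda>\<omega>. a \<omega> * b \<omega>)"
    unfolding ab using rl by auto
  have fab: "fn_of (NOW t) (\<lambda>\<omega>. a \<omega> * b \<omega>)" using fn_of_mult[OF fn_of_mono[OF WN(1) fa] fb] .
  have fa2: "fn_of (NOW t) (\<lambda>\<omega>. (a \<omega>)\<^sup>2)" using fn_of_mult[OF fn_of_mono[OF WN(1) fa] fn_of_mono[OF WN(1) fa]]
    by (simp add: power2_eq_square)
  have fx: "fn_of (PAST t) (X t)" unfolding X_def by (rule fn_of_traj)
  have fx2: "fn_of (PAST t) (\<lambda>\<omega>. (X t \<omega>)\<^sup>2)" using fn_of_mult[OF fx fx] by (simp add: power2_eq_square)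
  have i1: "indep_var borel (\<lambda>\<omega>. (X t \<omega>)\<^sup>2) borel (\<lambda>\<omega>. (a \<omega>)\<^sup>2)" by (rule fn_of_indep[OF PAST_NOW fx2 fa2])
  have i2: "indep_var borel (X t) borel (\<lambda>\<omega>. a \<omega> * b \<omega>)" by (rule fn_of_indep[OF PAST_NOW fx fab])
  have sx': "sqi (X t)" using sx unfolding X_def .
  note I1 = indep_int_mult[OF i1 conjunct2[OF sx'[unfolded sqi_def]] conjunct2[OF sa[unfolded sqi_def]]]
  note I2 = indep_int_mult[OF i2 sqi_int[OF sx'] Eab(2)]
  have sq: "(X (Suc t) \<omega>)\<^sup>2 = (X t \<omega>)\<^sup>2 * (a \<omega>)\<^sup>2 + 2 * (X t \<omega> * (a \<omega> * b \<omega>)) + (b \<omega>)\<^sup>2" for \<omega>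
    unfolding dec by (simp add: power2_eq_square algebra_simps)
  have ib: "integrable M (\<lambda>\<omega>. (b \<omega>)\<^sup>2)" using sb unfolding sqi_def by simp
  have int: "integrable M (\<lambda>\<omega>. (X (Suc t) \<omega>)\<^sup>2)"
    unfolding sq using I1(1) I2(1) ib by auto
  have mX: "X (Suc t) \<in> borel_measurable M" using fn_of_meas[OF fn_of_traj] unfolding X_def .
  show "sqi (traj A B C D x0 wx wu xi K S (Suc t))" using int mX unfolding sqi_def X_def by simp
  have "(\<integral>\<omega>. (X (Suc t) \<omega>)\<^sup>2 \<partial>M) = (\<integral>\<omega>. (X t \<omega>)\<^sup>2 \<partial>M) * VK A B C D K + 2 * ((\<integral>\<omega>. X t \<omega> \<partial>M) * 0) + tr2 (Mmat B D) S"
    unfolding sq using I1 I2 ib Ea Eb Eab(1) by (simp add: Bochner_Integration.integral_add)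
  then show "(\<integral>\<omega>. (traj A B C D x0 wx wu xi K S (Suc t) \<omega>)\<^sup>2 \<partial>M) =
       VK A B C D K * (\<integral>\<omega>. (traj A B C D x0 wx wu xi K S t \<omega>)\<^sup>2 \<partial>M) + tr2 (Mmat B D) S"
    unfolding X_def by simp
qed

end

lemma mv_neg: "(A::real^'n^'m) *v (- x) = - (A *v x)"
  by (simp add: matrix_vector_mult_def vec_eq_iff sum_negf)

context lqr begin

lemma lin_q:
  fixes L :: "real^'n^'n" and v :: "real^'n"
  shows "integrable M (\<lambda>\<omega>. (L *v xi t \<omega>) \<bullet> v)" "(\<integral>\<omega>. (L *v xi t \<omega>) \<bullet> v \<partial>M) = 0"
proof -
  have eq: "(\<lambda>\<omega>. (L *v xi t \<omega>) \<bullet> v) = (\<lambda>\<omega>. \<Sum>a\<in>UNIV. (\<Sum>k\<in>UNIV. L$k$a * v$k) * xi t \<omega> $ a)"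
  proof (rule ext)
    fix \<omega>
    have "(L *v xi t \<omega>) \<bullet> v = (\<Sum>k\<in>UNIV. \<Sum>a\<in>UNIV. L$k$a * v$k * xi t \<omega> $ a)"
      by (simp add: inner_vec_def matrix_vector_mult_def sum_distrib_left sum_distrib_right mult_ac)
    also have "\<dots> = (\<Sum>a\<in>UNIV. \<Sum>k\<in>UNIV. L$k$a * v$k * xi t \<omega> $ a)" by (rule sum.swap)
    also have "\<dots> = (\<Sum>a\<in>UNIV. (\<Sum>k\<in>UNIV. L$k$a * v$k) * xi t \<omega> $ a)" by (simp add: sum_distrib_right)
    finally show "(L *v xi t \<omega>) \<bullet> v = (\<Sum>a\<in>UNIV. (\<Sum>k\<in>UNIV. L$k$a * v$k) * xi t \<omega> $ a)" .
  qed
  have i: "integrable M (\<lambda>\<omega>. xi t \<omega> $ a)" for a by (rule sqi_int[OF xi_facts(1)])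
  show "integrable M (\<lambda>\<omega>. (L *v xi t \<omega>) \<bullet> v)"
    unfolding eq using i by (intro Bochner_Integration.integrable_sum Bochner_Integration.integrable_mult_right) auto
  show "(\<integral>\<omega>. (L *v xi t \<omega>) \<bullet> v \<partial>M) = 0"
    unfolding eq using i xi_facts(2) by (simp add: Bochner_Integration.integral_sum)
qed

lemma quad_q:
  fixes L G :: "real^'n^'n"
  shows "integrable M (\<lambda>\<omega>. (L *v xi t \<omega>) \<bullet> (G *v (L *v xi t \<omega>)))"
    "(\<integral>\<omega>. (L *v xi t \<omega>) \<bullet> (G *v (L *v xi t \<omega>)) \<partial>M) = tr2 G (L ** transpose L)"
proof -
  have eq: "(\<lambda>\<omega>. (L *v xi t \<omega>) \<bullet> (G *v (L *v xi t \<omega>))) =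
    (\<lambda>\<omega>. \<Sum>k\<in>UNIV. (0 + (\<Sum>a\<in>UNIV. L$k$a * xi t \<omega> $ a)) * (0 + (\<Sum>a\<in>UNIV. (G ** L)$k$a * xi t \<omega> $ a)))"
    by (rule ext) (simp add: inner_vec_def matrix_vector_mul_assoc, simp add: matrix_vector_mult_def)
  have sq: "sqi (\<lambda>\<omega>. xi t \<omega> $ a)" for a by (rule xi_facts(1))
  have m0: "(\<integral>\<omega>. xi t \<omega> $ a \<partial>M) = 0" for a by (rule xi_facts(2))
  have cov: "(\<integral>\<omega>. xi t \<omega> $ a * xi t \<omega> $ b \<partial>M) = (if a = b then 1 else 0)" for a b by (rule xi_cov)
  note on = ON_prod[of UNIV "\<lambda>a \<omega>. xi t \<omega> $ a", OF _ sq m0 cov]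
  have ik: "integrable M (\<lambda>\<omega>. (0 + (\<Sum>a\<in>UNIV. L$k$a * xi t \<omega> $ a)) * (0 + (\<Sum>a\<in>UNIV. (G ** L)$k$a * xi t \<omega> $ a)))" for k
    using on(1)[of 0 "\<lambda>a. L$k$a" 0 "\<lambda>a. (G ** L)$k$a"] by simp
  have ek: "(\<integral>\<omega>. (0 + (\<Sum>a\<in>UNIV. L$k$a * xi t \<omega> $ a)) * (0 + (\<Sum>a\<in>UNIV. (G ** L)$k$a * xi t \<omega> $ a)) \<partial>M) = (\<Sum>a\<in>UNIV. L$k$a * (G ** L)$k$a)" for k
    using on(2)[of 0 "\<lambda>a. L$k$a" 0 "\<lambda>a. (G ** L)$k$a"] by simp
  show "integrable M (\<lambda>\<omega>. (L *v xi t \<omega>) \<bullet> (G *v (L *v xi t \<omega>)))"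
    unfolding eq by (rule Bochner_Integration.integrable_sum) (rule ik)
  have "(\<integral>\<omega>. (L *v xi t \<omega>) \<bullet> (G *v (L *v xi t \<omega>)) \<partial>M) = (\<Sum>k\<in>UNIV. \<integral>\<omega>. (0 + (\<Sum>a\<in>UNIV. L$k$a * xi t \<omega> $ a)) * (0 + (\<Sum>a\<in>UNIV. (G ** L)$k$a * xi t \<omega> $ a)) \<partial>M)"
    unfolding eq by (rule Bochner_Integration.integral_sum) (rule ik)
  also have "\<dots> = (\<Sum>k\<in>UNIV. \<Sum>a\<in>UNIV. L$k$a * (G ** L)$k$a)"
    by (simp only: ek)
  also have "\<dots> = (\<Sum>k\<in>UNIV. \<Sum>a\<in>UNIV. \<Sum>b\<in>UNIV. G$k$b * (L$k$a * L$b$a))"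
    by (simp add: matrix_matrix_mult_def sum_distrib_left mult_ac)
  also have "\<dots> = (\<Sum>k\<in>UNIV. \<Sum>b\<in>UNIV. \<Sum>a\<in>UNIV. G$k$b * (L$k$a * L$b$a))"
    by (rule sum.cong[OF refl], rule sum.swap)
  also have "\<dots> = tr2 G (L ** transpose L)"
    by (simp add: tr2_def matrix_matrix_mult_def transpose_def sum_distrib_left)
  finally show "(\<integral>\<omega>. (L *v xi t \<omega>) \<bullet> (G *v (L *v xi t \<omega>)) \<partial>M) = tr2 G (L ** transpose L)" .
qed

lemma moments:
  fixes A C :: real and B K :: "real^'n" and D S :: "real^'n^'n"
  assumes LL: "msqrt S ** transpose (msqrt S) = S"
  shows "sqi (traj A B C D x0 wx wu xi K S t) \<and>
    (\<integral>\<omega>. (traj A B C D x0 wx wu xi K S (Suc t) \<omega>)\<^sup>2 \<partial>M) =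
       VK A B C D K * (\<integral>\<omega>. (traj A B C D x0 wx wu xi K S t \<omega>)\<^sup>2 \<partial>M) + tr2 (Mmat B D) S"
proof (induction t)
  case 0
  have "traj A B C D x0 wx wu xi K S 0 = x0" by (rule ext) simp
  then have s: "sqi (traj A B C D x0 wx wu xi K S 0)" using sqi_x0 by simp
  show ?case by (intro conjI s step(2)[OF LL s])
next
  case (Suc t)
  have s: "sqi (traj A B C D x0 wx wu xi K S (Suc t))" using step(1)[OF LL] Suc.IH by blast
  show ?case by (intro conjI s step(2)[OF LL s])
qed

end

lemma inner_mv_swap: "(x::real^'n) \<bullet> (A *v y) = y \<bullet> (transpose A *v x)"
  by (metis dot_lmul_matrix inner_commute transpose_matrix_vector)

lemma tr2_inv: "pos_def_mat (S::real^'n^'n) \<Longrightarrow> tr2 (matrix_inv S) S = real CARD('n)"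
proof -
  assume pd: "pos_def_mat S"
  have sym: "transpose S = S" using pd unfolding pos_def_mat_def by simp
  have inv: "matrix_inv S ** S = mat 1" using invertible_inv[OF pd_invertible[OF pd]] by simp
  have "tr2 (matrix_inv S) S = (\<Sum>i\<in>UNIV. (matrix_inv S ** transpose S) $ i $ i)"
    by (simp add: tr2_def matrix_matrix_mult_def transpose_def)
  also have "\<dots> = real CARD('n)" by (simp add: sym inv mat_def)
  finally show ?thesis .
qed

context lqr begin

lemma cost_step:
  fixes A C Q \<tau> :: real and B K :: "real^'n" and D S R :: "real^'n^'n"
  assumes pd: "pos_def_mat S"
  shows "(\<integral>\<omega>. (let x = traj A B C D x0 wx wu xi K S t \<omega>; u = act S xi K t x \<omega> in
              Q * x\<^sup>2 + u \<bullet> (R *v u) + \<tau> * gauss_logpdf S (- (x *\<^sub>R K)) u) \<partial>M)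
     = (Q + K \<bullet> (R *v K)) * (\<integral>\<omega>. (traj A B C D x0 wx wu xi K S t \<omega>)\<^sup>2 \<partial>M) + tr2 R S
       + \<tau> * (- (real CARD('n) / 2) * ln (2 * pi) - ln (det S) / 2 - real CARD('n) / 2)"
proof -
  define X where "X = traj A B C D x0 wx wu xi K S t"
  define L where "L = msqrt S"
  have LL: "L ** transpose L = S" unfolding L_def by (rule msqrt_prop[OF pd])
  define q where "q \<omega> = L *v xi t \<omega>" for \<omega>
  define l where "l \<omega> = q \<omega> \<bullet> (transpose R *v K) + q \<omega> \<bullet> (R *v K)" for \<omega>
  define c0 where "c0 = - (real CARD('n) / 2) * ln (2 * pi) - ln (det S) / 2"
  have pt: "(let x = X \<omega>; u = act S xi K t x \<omega> in Q * x\<^sup>2 + u \<bullet> (R *v u) + \<tau> * gauss_logpdf S (- (x *\<^sub>R K)) u)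
    = (Q + K \<bullet> (R *v K)) * (X \<omega>)\<^sup>2 - X \<omega> * l \<omega> + q \<omega> \<bullet> (R *v q \<omega>) + \<tau> * c0
      - (\<tau> / 2) * (q \<omega> \<bullet> (matrix_inv S *v q \<omega>))" for \<omega>
  proof -
    have u: "act S xi K t (X \<omega>) \<omega> = - (X \<omega> *\<^sub>R K) + q \<omega>" by (simp add: act_def q_def L_def)
    have sw: "K \<bullet> (R *v q \<omega>) = q \<omega> \<bullet> (transpose R *v K)" by (rule inner_mv_swap)
    show ?thesis
      unfolding Let_def u gauss_logpdf_def c0_def l_def
      by (simp add: mv_neg matrix_vector_right_distrib matrix_vector_mult_scaleR inner_add_left inner_add_right
          sw power2_eq_square algebra_simps)
  qed
  have fx: "fn_of (PAST t) X" unfolding X_def by (rule fn_of_traj)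
  have fl: "fn_of (NOW t) l"
    unfolding l_def q_def by (intro fn_of_add fn_of_inner fnv_mvmul fnv_xi fnv_const) (auto simp: NOW_def)
  have sx: "sqi X" using moments[OF msqrt_prop[OF pd]] unfolding X_def by blast
  have il: "integrable M l" unfolding l_def q_def using lin_q by (intro Bochner_Integration.integrable_add) auto
  have El: "(\<integral>\<omega>. l \<omega> \<partial>M) = 0" unfolding l_def q_def using lin_q by (simp add: Bochner_Integration.integral_add)
  note I = indep_int_mult[OF fn_of_indep[OF PAST_NOW fx fl] sqi_int[OF sx] il]
  note Q1 = quad_q[of L t R, folded q_def, unfolded LL]
  note Q2 = quad_q[of L t "matrix_inv S", folded q_def, unfolded LL tr2_inv[OF pd]]
  have ix: "integrable M (\<lambda>\<omega>. (X \<omega>)\<^sup>2)" using sx unfolding sqi_def by simp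
  have "(\<integral>\<omega>. (let x = X \<omega>; u = act S xi K t x \<omega> in Q * x\<^sup>2 + u \<bullet> (R *v u) + \<tau> * gauss_logpdf S (- (x *\<^sub>R K)) u) \<partial>M)
     = (\<integral>\<omega>. (Q + K \<bullet> (R *v K)) * (X \<omega>)\<^sup>2 - X \<omega> * l \<omega> + q \<omega> \<bullet> (R *v q \<omega>) + \<tau> * c0
      - (\<tau> / 2) * (q \<omega> \<bullet> (matrix_inv S *v q \<omega>)) \<partial>M)"
    by (simp only: pt)
  also have "\<dots> = (Q + K \<bullet> (R *v K)) * (\<integral>\<omega>. (X \<omega>)\<^sup>2 \<partial>M) - (\<integral>\<omega>. X \<omega> \<partial>M) * 0 + tr2 R S + \<tau> * c0 - (\<tau> / 2) * real CARD('n)"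
  proof (rule has_bochner_integral_integral_eq)
    have h1: "has_bochner_integral M (\<lambda>\<omega>. (Q + K \<bullet> (R *v K)) * (X \<omega>)\<^sup>2) ((Q + K \<bullet> (R *v K)) * (\<integral>\<omega>. (X \<omega>)\<^sup>2 \<partial>M))"
      by (intro has_bochner_integral_mult_right has_bochner_integral_integrable ix)
    have h2: "has_bochner_integral M (\<lambda>\<omega>. X \<omega> * l \<omega>) ((\<integral>\<omega>. X \<omega> \<partial>M) * 0)"
      using has_bochner_integral_integrable[OF I(1)] I(2) El by simp
    have h3: "has_bochner_integral M (\<lambda>\<omega>. q \<omega> \<bullet> (R *v q \<omega>)) (tr2 R S)"
      using has_bochner_integral_integrable[OF Q1(1)] Q1(2) by simp
    have h4: "has_bochner_integral M (\<lambda>\<omega>. \<tau> * c0) (\<tau> * c0)"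
      using has_bochner_integral_integrable[of M "\<lambda>\<omega>. \<tau> * c0"] by (simp add: prob_space)
    have h5: "has_bochner_integral M (\<lambda>\<omega>. (\<tau> / 2) * (q \<omega> \<bullet> (matrix_inv S *v q \<omega>))) ((\<tau> / 2) * real CARD('n))"
      using has_bochner_integral_mult_right[OF has_bochner_integral_integrable[OF Q2(1)], of "\<tau> / 2"] Q2(2) by simp
    show "has_bochner_integral M (\<lambda>\<omega>. (Q + K \<bullet> (R *v K)) * (X \<omega>)\<^sup>2 - X \<omega> * l \<omega> + q \<omega> \<bullet> (R *v q \<omega>) + \<tau> * c0
      - (\<tau> / 2) * (q \<omega> \<bullet> (matrix_inv S *v q \<omega>)))
      ((Q + K \<bullet> (R *v K)) * (\<integral>\<omega>. (X \<omega>)\<^sup>2 \<partial>M) - (\<integral>\<omega>. X \<omega> \<partial>M) * 0 + tr2 R S + \<tau> * c0 - (\<tau> / 2) * real CARD('n))"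
      by (intro has_bochner_integral_diff has_bochner_integral_add h1 h2 h3 h4 h5)
  qed
  finally have e: "(\<integral>\<omega>. (let x = X \<omega>; u = act S xi K t x \<omega> in Q * x\<^sup>2 + u \<bullet> (R *v u) + \<tau> * gauss_logpdf S (- (x *\<^sub>R K)) u) \<partial>M)
     = (Q + K \<bullet> (R *v K)) * (\<integral>\<omega>. (X \<omega>)\<^sup>2 \<partial>M) - (\<integral>\<omega>. X \<omega> \<partial>M) * 0 + tr2 R S + \<tau> * c0 - (\<tau> / 2) * real CARD('n)" .
  have r: "(Q + K \<bullet> (R *v K)) * (\<integral>\<omega>. (X \<omega>)\<^sup>2 \<partial>M) - (\<integral>\<omega>. X \<omega> \<partial>M) * 0 + tr2 R S + \<tau> * c0 - (\<tau> / 2) * real CARD('n)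
     = (Q + K \<bullet> (R *v K)) * (\<integral>\<omega>. (X \<omega>)\<^sup>2 \<partial>M) + tr2 R S
       + \<tau> * (- (real CARD('n) / 2) * ln (2 * pi) - ln (det S) / 2 - real CARD('n) / 2)"
    unfolding c0_def by (simp add: algebra_simps)
  show ?thesis using trans[OF e r] unfolding X_def .
qed

end

lemma rec_sums:
  fixes m :: "nat \<Rightarrow> real"
  assumes m0: "m 0 = \<mu>" and ms: "\<And>t. m (Suc t) = V * m t + T" and nn: "\<And>t. m t \<ge> 0" and T: "T \<ge> 0"
    and g: "0 < \<gamma>" "\<gamma> < 1" "\<gamma> * V < 1"
  shows "(\<lambda>t. \<gamma>^t * m t) sums ((\<mu> + \<gamma> * T / (1 - \<gamma>)) / (1 - \<gamma> * V))"
proof -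
  define W where "W = (max 1 V + 1/\<gamma>) / 2"
  have ig: "1 / \<gamma> > max 1 V"
    using g by (auto simp: field_simps max_def)
  have W1: "W > max 1 V" using ig unfolding W_def by simp
  have gW: "\<gamma> * W < 1"
  proof -
    have "\<gamma> * max 1 V < 1" using g by (simp add: max_def mult.commute)
    then show ?thesis using g unfolding W_def by (simp add: field_simps)
  qed
  have Wp: "W - max 0 V > 0" using W1 by (simp add: max_def split: if_splits)
  define C where "C = max \<mu> (T / (W - max 0 V))"
  have "T / (W - max 0 V) \<ge> 0" using T Wp by simp
  then have C0: "C \<ge> 0" unfolding C_def by (rule order_trans[OF _ max.cobounded2])
  have CT: "C * (W - max 0 V) \<ge> T"
  proof -
    have "T / (W - max 0 V) \<le> C" unfolding C_def by simp
    then show ?thesis using Wp by (simp add: field_simps)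
  qed
  have W0: "W \<ge> 1" using W1 by simp
  have bound: "m t \<le> C * W^t" for t
  proof (induction t)
    case 0 then show ?case using m0 by (simp add: C_def)
  next
    case (Suc t)
    have Wt: "W^t \<ge> 1" using W0 by (simp add: one_le_power)
    have "m (Suc t) \<le> max 0 V * m t + T" using ms[of t] nn[of t] by (simp add: max_def mult_right_mono)
    also have "\<dots> \<le> max 0 V * (C * W^t) + T" using Suc.IH by (simp add: mult_left_mono)
    also have "T \<le> C * (W - max 0 V) * W^t"
      using CT Wt C0 Wp by (metis mult_left_mono mult.commute mult_1_left order_trans less_imp_le mult_nonneg_nonneg)
    then have "max 0 V * (C * W^t) + T \<le> C * W^(Suc t)" by (simp add: algebra_simps)
    finally show ?case .
  qed
  have summ: "summable (\<lambda>t. \<gamma>^t * m t)"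
  proof (rule summable_comparison_test)
    show "\<exists>N. \<forall>n\<ge>N. norm (\<gamma>^n * m n) \<le> C * (\<gamma> * W)^n"
      using bound nn g by (auto simp: abs_mult power_mult_distrib intro!: exI[of _ 0] mult_left_mono[of _ _ "\<gamma>^_", THEN order_trans])
    have "\<gamma> * W \<ge> 0" using g W0 by simp
    then show "summable (\<lambda>n. C * (\<gamma> * W)^n)" using gW by (intro summable_mult summable_geometric) simp
  qed
  define \<sigma> where "\<sigma> = suminf (\<lambda>t. \<gamma>^t * m t)"
  have s: "(\<lambda>t. \<gamma>^t * m t) sums \<sigma>" using summ unfolding \<sigma>_def by (rule summable_sums)
  have "(\<lambda>t. (\<gamma> * V) * (\<gamma>^t * m t) + (\<gamma> * T) * \<gamma>^t) sums ((\<gamma> * V) * \<sigma> + (\<gamma> * T) * (1 / (1 - \<gamma>)))"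
    using g by (intro sums_add sums_mult s geometric_sums) auto
  moreover have "(\<lambda>t. (\<gamma> * V) * (\<gamma>^t * m t) + (\<gamma> * T) * \<gamma>^t) = (\<lambda>t. \<gamma>^(Suc t) * m (Suc t))"
    by (rule ext) (simp add: ms algebra_simps)
  ultimately have "(\<lambda>t. \<gamma>^(Suc t) * m (Suc t)) sums ((\<gamma> * V) * \<sigma> + (\<gamma> * T) * (1 / (1 - \<gamma>)))" by simp
  then have "(\<lambda>t. \<gamma>^t * m t) sums ((\<gamma> * V) * \<sigma> + (\<gamma> * T) * (1 / (1 - \<gamma>)) + \<mu>)"
    using sums_Suc_iff[of "\<lambda>t. \<gamma>^t * m t"] m0 by simp
  then have "\<sigma> = (\<gamma> * V) * \<sigma> + (\<gamma> * T) * (1 / (1 - \<gamma>)) + \<mu>" using s sums_unique2 by blast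
  then have "\<sigma> * (1 - \<gamma> * V) = \<mu> + \<gamma> * T / (1 - \<gamma>)"
    by (simp add: algebra_simps)
  moreover have "1 - \<gamma> * V \<noteq> 0" using g by simp
  ultimately have "\<sigma> = (\<mu> + \<gamma> * T / (1 - \<gamma>)) / (1 - \<gamma> * V)"
    by (simp add: eq_divide_eq)
  then show ?thesis using s by simp
qed

definition csig :: "real \<Rightarrow> real \<Rightarrow> real \<Rightarrow> real \<Rightarrow> real" where
  "csig \<mu> \<gamma> T V = (\<mu> + \<gamma> * T / (1 - \<gamma>)) / (1 - \<gamma> * V)"

definition centr :: "real^'n^'n \<Rightarrow> real" where
  "centr S = - (real CARD('n) / 2) * ln (2 * pi) - ln (det S) / 2 - real CARD('n) / 2"

context lqr begin

lemma closed_forms: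
  fixes A C Q \<tau> \<gamma> :: real and B K :: "real^'n" and D S R :: "real^'n^'n"
  assumes pd: "pos_def_mat S" and g: "0 < \<gamma>" "\<gamma> < 1" "\<gamma> * VK A B C D K < 1"
  shows "S_KS M A B C D \<gamma> x0 wx wu xi K S = csig (\<integral>\<omega>. (x0 \<omega>)\<^sup>2 \<partial>M) \<gamma> (tr2 (Mmat B D) S) (VK A B C D K)"
    "cost_f M A B C D Q R \<gamma> \<tau> x0 wx wu xi K S =
       (Q + K \<bullet> (R *v K)) * csig (\<integral>\<omega>. (x0 \<omega>)\<^sup>2 \<partial>M) \<gamma> (tr2 (Mmat B D) S) (VK A B C D K)
       + (tr2 R S + \<tau> * centr S) / (1 - \<gamma>)"
proof -
  have LL: "msqrt S ** transpose (msqrt S) = S" by (rule msqrt_prop[OF pd])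
  define m where "m t = (\<integral>\<omega>. (traj A B C D x0 wx wu xi K S t \<omega>)\<^sup>2 \<partial>M)" for t
  have t0: "traj A B C D x0 wx wu xi K S 0 = x0" by (rule ext) simp
  have m0: "m 0 = (\<integral>\<omega>. (x0 \<omega>)\<^sup>2 \<partial>M)" unfolding m_def t0 ..
  have ms: "m (Suc t) = VK A B C D K * m t + tr2 (Mmat B D) S" for t
    unfolding m_def using moments[OF LL] by blast
  have nn: "m t \<ge> 0" for t unfolding m_def by simp
  have T: "tr2 (Mmat B D) S \<ge> 0"
  proof -
    have "tr2 (Mmat B D) S = (\<Sum>k\<in>UNIV. \<integral>\<omega>. (cf 0 B D (msqrt S) k \<omega>)\<^sup>2 \<partial>M)"
      using c_moment[of 0 B D "msqrt S"] LL by simp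
    also have "\<dots> \<ge> 0" by (intro sum_nonneg) simp
    finally show ?thesis .
  qed
  have sm: "(\<lambda>t. \<gamma>^t * m t) sums csig (\<integral>\<omega>. (x0 \<omega>)\<^sup>2 \<partial>M) \<gamma> (tr2 (Mmat B D) S) (VK A B C D K)"
    unfolding csig_def using rec_sums[OF m0 ms nn T g] .
  show "S_KS M A B C D \<gamma> x0 wx wu xi K S = csig (\<integral>\<omega>. (x0 \<omega>)\<^sup>2 \<partial>M) \<gamma> (tr2 (Mmat B D) S) (VK A B C D K)"
    unfolding S_KS_def using sums_unique[OF sm] unfolding m_def by simp
  have cs: "(\<integral>\<omega>. (let x = traj A B C D x0 wx wu xi K S t \<omega>; u = act S xi K t x \<omega> in
              Q * x\<^sup>2 + u \<bullet> (R *v u) + \<tau> * gauss_logpdf S (- (x *\<^sub>R K)) u) \<partial>M)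
     = (Q + K \<bullet> (R *v K)) * m t + (tr2 R S + \<tau> * centr S)" for t
  proof -
    have r: "(Q + K \<bullet> (R *v K)) * (\<integral>\<omega>. (traj A B C D x0 wx wu xi K S t \<omega>)\<^sup>2 \<partial>M) + tr2 R S
       + \<tau> * (- (real CARD('n) / 2) * ln (2 * pi) - ln (det S) / 2 - real CARD('n) / 2)
       = (Q + K \<bullet> (R *v K)) * m t + (tr2 R S + \<tau> * centr S)"
      unfolding m_def centr_def by (simp only: add.assoc)
    show ?thesis by (rule trans[OF cost_step[OF pd] r])
  qed
  have "(\<lambda>t. (Q + K \<bullet> (R *v K)) * (\<gamma>^t * m t) + (tr2 R S + \<tau> * centr S) * \<gamma>^t) sums
     ((Q + K \<bullet> (R *v K)) * csig (\<integral>\<omega>. (x0 \<omega>)\<^sup>2 \<partial>M) \<gamma> (tr2 (Mmat B D) S) (VK A B C D K)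
       + (tr2 R S + \<tau> * centr S) * (1 / (1 - \<gamma>)))"
    using g by (intro sums_add sums_mult sm geometric_sums) auto
  moreover have "(\<lambda>t. (Q + K \<bullet> (R *v K)) * (\<gamma>^t * m t) + (tr2 R S + \<tau> * centr S) * \<gamma>^t) =
    (\<lambda>t. \<gamma> ^ t * (\<integral>\<omega>. (let x = traj A B C D x0 wx wu xi K S t \<omega>; u = act S xi K t x \<omega> in
              Q * x\<^sup>2 + u \<bullet> (R *v u) + \<tau> * gauss_logpdf S (- (x *\<^sub>R K)) u) \<partial>M))"
    by (rule ext) (simp only: cs, simp add: algebra_simps)
  ultimately show "cost_f M A B C D Q R \<gamma> \<tau> x0 wx wu xi K S =
       (Q + K \<bullet> (R *v K)) * csig (\<integral>\<omega>. (x0 \<omega>)\<^sup>2 \<partial>M) \<gamma> (tr2 (Mmat B D) S) (VK A B C D K)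
       + (tr2 R S + \<tau> * centr S) / (1 - \<gamma>)"
    unfolding cost_f_def by (simp add: sums_unique[symmetric])
qed

end

lemma Mmat_sym:
  fixes B :: "real^'n" and D :: "real^'n^'n"
  shows "transpose (Mmat B D) = Mmat B D"
proof -
  have "transpose (\<chi> i j. B $ i * B $ j) = (\<chi> i j. B $ i * B $ j)"
    by (simp add: transpose_def vec_eq_iff mult.commute)
  moreover have "transpose (transpose D ** D) = transpose D ** D"
    by (simp add: matrix_transpose_mul)
  moreover have "transpose (X + Y) = transpose X + transpose Y" for X Y :: "real^'n^'n"
    by (simp add: transpose_def vec_eq_iff)
  ultimately show ?thesis unfolding Mmat_def by simp
qed

lemma dquad:
  assumes "transpose R = R"
  shows "((\<lambda>x::real^'n. x \<bullet> (R *v x)) has_derivative (\<lambda>h. (2 *\<^sub>R (R *v x0)) \<bullet> h)) (at x0 within s)"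
proof -
  have l: "((\<lambda>x. R *v x) has_derivative (\<lambda>h. R *v h)) (at x0 within s)"
    by (rule bounded_linear_imp_has_derivative) simp
  have "((\<lambda>x::real^'n. x \<bullet> (R *v x)) has_derivative (\<lambda>h. x0 \<bullet> (R *v h) + h \<bullet> (R *v x0))) (at x0 within s)"
    by (rule has_derivative_inner[OF has_derivative_ident l])
  moreover have "(\<lambda>h. x0 \<bullet> (R *v h) + h \<bullet> (R *v x0)) = (\<lambda>h. (2 *\<^sub>R (R *v x0)) \<bullet> h)"
    by (rule ext) (simp add: inner_mv_swap[of x0 R] assms inner_commute)
  ultimately show ?thesis by simp
qed

lemma dVK:
  fixes B K :: "real^'n" and D :: "real^'n^'n"
  shows "(VK A B C D has_derivative (\<lambda>h. (2 *\<^sub>R (Mmat B D *v K) - (2 * A) *\<^sub>R B) \<bullet> h)) (at K within s)"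
proof -
  have q: "((\<lambda>x::real^'n. x \<bullet> (Mmat B D *v x)) has_derivative (\<lambda>h. (2 *\<^sub>R (Mmat B D *v K)) \<bullet> h)) (at K within s)"
    by (rule dquad[OF Mmat_sym])
  have b: "((\<lambda>x. B \<bullet> x) has_derivative (\<lambda>h. B \<bullet> h)) (at K within s)"
    by (rule has_derivative_inner_right[OF has_derivative_ident])
  have "((\<lambda>x. A\<^sup>2 + C\<^sup>2 + x \<bullet> (Mmat B D *v x) - 2 * A * (B \<bullet> x)) has_derivative
     (\<lambda>h. 0 + 0 + (2 *\<^sub>R (Mmat B D *v K)) \<bullet> h - 2 * A * (B \<bullet> h))) (at K within s)"
    by (intro has_derivative_diff has_derivative_add has_derivative_const q has_derivative_mult_right b)
  then show ?thesis unfolding VK_def[abs_def]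
    by (rule has_derivative_eq_rhs) (auto simp: inner_diff_left algebra_simps)
qed

lemma alg_dK:
  fixes N D \<beta> v b r A \<gamma> :: real
  assumes "D \<noteq> 0"
  shows "N * ((0 * D - \<beta> * (0 - \<gamma> * (2 * v - 2 * A * b))) / (D * D)) + (0 + 2 * r) * (\<beta> / D) + 0
    = (\<beta> / D) * (2 * r + 2 * \<gamma> * (N / D) * (v - A * b))"
  using assms by (simp add: field_simps)

lemma dK:
  fixes R :: "real^'n^'n"
  assumes R: "transpose R = R" and g: "\<gamma> * VK A B C D K < 1" "\<gamma> < 1"
  shows "((\<lambda>K'. (Q + K' \<bullet> (R *v K')) * csig \<mu> \<gamma> T (VK A B C D K') + c) has_derivative
     (\<lambda>h. (csig \<mu> \<gamma> T (VK A B C D K) *\<^sub>R EK \<gamma> A B C D Q R K) \<bullet> h)) (at K)"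
proof -
  define \<beta> where "\<beta> = \<mu> + \<gamma> * T / (1 - \<gamma>)"
  have cs: "csig \<mu> \<gamma> T V = \<beta> / (1 - \<gamma> * V)" for V unfolding csig_def \<beta>_def ..
  have dn: "1 - \<gamma> * VK A B C D K \<noteq> 0" using g by simp
  have d1: "((\<lambda>K'. Q + K' \<bullet> (R *v K')) has_derivative (\<lambda>h. 0 + (2 *\<^sub>R (R *v K)) \<bullet> h)) (at K)"
    by (intro has_derivative_add has_derivative_const dquad[OF R])
  have d2: "((\<lambda>K'. 1 - \<gamma> * VK A B C D K') has_derivative (\<lambda>h. 0 - \<gamma> * ((2 *\<^sub>R (Mmat B D *v K) - (2 * A) *\<^sub>R B) \<bullet> h))) (at K)"
    by (intro has_derivative_diff has_derivative_const has_derivative_mult_right dVK)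
  have d3: "((\<lambda>K'. \<beta> / (1 - \<gamma> * VK A B C D K')) has_derivative
       (\<lambda>h. (0 * (1 - \<gamma> * VK A B C D K) - \<beta> * (0 - \<gamma> * ((2 *\<^sub>R (Mmat B D *v K) - (2 * A) *\<^sub>R B) \<bullet> h))) /
            ((1 - \<gamma> * VK A B C D K) * (1 - \<gamma> * VK A B C D K)))) (at K)"
    by (rule has_derivative_divide'[OF has_derivative_const d2 dn])
  have d4: "((\<lambda>K'. (Q + K' \<bullet> (R *v K')) * (\<beta> / (1 - \<gamma> * VK A B C D K')) + c) has_derivative
     (\<lambda>h. (Q + K \<bullet> (R *v K)) * ((0 * (1 - \<gamma> * VK A B C D K) - \<beta> * (0 - \<gamma> * ((2 *\<^sub>R (Mmat B D *v K) - (2 * A) *\<^sub>R B) \<bullet> h))) /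
            ((1 - \<gamma> * VK A B C D K) * (1 - \<gamma> * VK A B C D K))) + (0 + (2 *\<^sub>R (R *v K)) \<bullet> h) * (\<beta> / (1 - \<gamma> * VK A B C D K)) + 0)) (at K)"
    by (intro has_derivative_add has_derivative_mult d1 d3 has_derivative_const)
  show ?thesis
    unfolding cs
  proof (rule has_derivative_eq_rhs[OF d4], rule ext)
    fix h
    show "(Q + K \<bullet> (R *v K)) * ((0 * (1 - \<gamma> * VK A B C D K) - \<beta> * (0 - \<gamma> * ((2 *\<^sub>R (Mmat B D *v K) - (2 * A) *\<^sub>R B) \<bullet> h))) /
            ((1 - \<gamma> * VK A B C D K) * (1 - \<gamma> * VK A B C D K))) + (0 + (2 *\<^sub>R (R *v K)) \<bullet> h) * (\<beta> / (1 - \<gamma> * VK A B C D K)) + 0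
      = ((\<beta> / (1 - \<gamma> * VK A B C D K)) *\<^sub>R EK \<gamma> A B C D Q R K) \<bullet> h"
    proof -
      have e1: "(2 *\<^sub>R (Mmat B D *v K) - (2 * A) *\<^sub>R B) \<bullet> h = 2 * ((Mmat B D *v K) \<bullet> h) - 2 * A * (B \<bullet> h)"
        by (simp add: inner_diff_left)
      have e2: "(2 *\<^sub>R (R *v K)) \<bullet> h = 2 * ((R *v K) \<bullet> h)" by simp
      have e3: "((\<beta> / (1 - \<gamma> * VK A B C D K)) *\<^sub>R EK \<gamma> A B C D Q R K) \<bullet> h =
          (\<beta> / (1 - \<gamma> * VK A B C D K)) * (2 * ((R *v K) \<bullet> h) + 2 * \<gamma> * ((Q + K \<bullet> (R *v K)) / (1 - \<gamma> * VK A B C D K)) * ((Mmat B D *v K) \<bullet> h - A * (B \<bullet> h)))"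
      proof -
        have "((\<beta> / (1 - \<gamma> * VK A B C D K)) *\<^sub>R EK \<gamma> A B C D Q R K) \<bullet> h =
          (\<beta> / (1 - \<gamma> * VK A B C D K)) * (2 * ((R *v K) \<bullet> h) + 2 * \<gamma> * PK \<gamma> A B C D Q R K * ((Mmat B D *v K) \<bullet> h - A * (B \<bullet> h)))"
          by (simp only: EK_def inner_add_left inner_diff_left inner_scaleR_left)
        then show ?thesis by (simp only: PK_def)
      qed
      show ?thesis unfolding e1 e2 e3 by (rule alg_dK[OF dn])
    qed
  qed
qed

lemma norm_mv_le: "norm ((A::real^'n^'m) *v x) \<le> (\<Sum>i\<in>UNIV. \<Sum>j\<in>UNIV. \<bar>A $ i $ j\<bar>) * norm x"
  using onorm[OF matrix_vector_mul_bounded_linear, of A x] onorm_le_matrix_component_sum[of A]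
  by (meson mult_right_mono norm_ge_zero order_trans)

lemma entry_le_norm: "\<bar>(H::real^'n^'m) $ i $ j\<bar> \<le> norm H"
proof -
  have "\<bar>H$i$j\<bar> \<le> norm (H$i)" by (rule component_le_norm_cart)
  also have "\<dots> \<le> norm H" by (rule Finite_Cartesian_Product.norm_nth_le)
  finally show ?thesis .
qed

lemma sum_entries_le: "(\<Sum>i\<in>UNIV. \<Sum>j\<in>UNIV. \<bar>(H::real^'n^'m) $ i $ j\<bar>) \<le> real CARD('m) * real CARD('n) * norm H"
proof -
  have "(\<Sum>i\<in>UNIV. \<Sum>j\<in>UNIV. \<bar>(H::real^'n^'m) $ i $ j\<bar>) \<le> (\<Sum>i\<in>(UNIV::'m set). \<Sum>j\<in>(UNIV::'n set). norm H)"
    by (intro sum_mono entry_le_norm)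
  then show ?thesis by simp
qed

lemma pd_nbhd:
  fixes S :: "real^'n^'n"
  assumes pd: "pos_def_mat S"
  shows "\<exists>d>0. \<forall>S'. transpose S' = S' \<longrightarrow> dist S' S < d \<longrightarrow> pos_def_mat S'"
proof -
  define L where "L = msqrt S"
  have LL: "L ** transpose L = S" unfolding L_def by (rule msqrt_prop[OF pd])
  have "det S = det L * det L" using LL det_mul[of L "transpose L"] by simp
  moreover have "det S \<noteq> 0" using pd_det_pos[OF pd] by simp
  ultimately have "det (transpose L) \<noteq> 0" by simp
  then have invL: "invertible (transpose L)" by (simp add: invertible_det_nz)
  define Li where "Li = matrix_inv (transpose L)"
  have LiL: "Li ** transpose L = mat 1" using invertible_inv[OF invL] unfolding Li_def by simp
  define cL where "cL = (\<Sum>i\<in>UNIV. \<Sum>j\<in>UNIV. \<bar>Li $ i $ j\<bar>) + 1"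
  have cL0: "cL > 0" unfolding cL_def by (simp add: add_nonneg_pos sum_nonneg)
  have vb: "norm v \<le> cL * norm (transpose L *v v)" for v
  proof -
    have e: "Li *v (transpose L *v v) = v" by (simp only: matrix_vector_mul_assoc LiL matrix_vector_mul_lid)
    have "norm v \<le> (\<Sum>i\<in>UNIV. \<Sum>j\<in>UNIV. \<bar>Li $ i $ j\<bar>) * norm (transpose L *v v)"
      using norm_mv_le[of Li "transpose L *v v"] unfolding e .
    also have "\<dots> \<le> cL * norm (transpose L *v v)" unfolding cL_def by (simp add: mult_right_mono)
    finally show ?thesis .
  qed
  have quadS: "v \<bullet> (S *v v) = (norm (transpose L *v v))\<^sup>2" for v
  proof -
    have "v \<bullet> (S *v v) = v \<bullet> (L *v (transpose L *v v))" by (simp only: LL[symmetric] matrix_vector_mul_assoc)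
    also have "\<dots> = (transpose L *v v) \<bullet> (transpose L *v v)" by (rule inner_mv_swap)
    finally show ?thesis by (simp add: power2_norm_eq_inner)
  qed
  have lowS: "(norm v)\<^sup>2 \<le> cL\<^sup>2 * (v \<bullet> (S *v v))" for v
  proof -
    have "(norm v)\<^sup>2 \<le> (cL * norm (transpose L *v v))\<^sup>2"
      using vb[of v] by (intro power_mono) auto
    then show ?thesis by (simp add: quadS power_mult_distrib)
  qed
  define n2 where "n2 = real CARD('n) * real CARD('n)"
  define d where "d = 1 / (cL\<^sup>2 * (n2 + 1))"
  have d0: "d > 0" unfolding d_def n2_def using cL0 by (simp add: add_nonneg_pos)
  show ?thesis
  proof (intro exI[of _ d] conjI allI impI d0)
    fix S' :: "real^'n^'n" assume sym: "transpose S' = S'" and ds: "dist S' S < d"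
    define H where "H = S' - S"
    have nH: "norm H < d" using ds by (simp add: dist_norm H_def)
    show "pos_def_mat S'"
      unfolding pos_def_mat_def
    proof (intro conjI sym allI impI)
      fix v :: "real^'n" assume v0: "v \<noteq> 0"
      have nv: "norm v > 0" using v0 by simp
      have "\<bar>v \<bullet> (H *v v)\<bar> \<le> norm v * norm (H *v v)" by (rule Cauchy_Schwarz_ineq2)
      also have "\<dots> \<le> norm v * ((\<Sum>i\<in>UNIV. \<Sum>j\<in>UNIV. \<bar>H $ i $ j\<bar>) * norm v)"
        by (intro mult_left_mono norm_mv_le) simp
      also have "\<dots> \<le> norm v * ((n2 * norm H) * norm v)"
        unfolding n2_def by (intro mult_left_mono mult_right_mono sum_entries_le) auto
      finally have hb: "\<bar>v \<bullet> (H *v v)\<bar> \<le> n2 * norm H * (norm v)\<^sup>2" by (simp add: power2_eq_square mult_ac)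
      have n20: "n2 \<ge> 0" unfolding n2_def by simp
      have "n2 * norm H * cL\<^sup>2 < 1"
      proof -
        have "n2 * norm H * cL\<^sup>2 \<le> n2 * d * cL\<^sup>2" using nH n20 by (intro mult_right_mono mult_left_mono) auto
        also have "n2 * d * cL\<^sup>2 = n2 / (n2 + 1)"
        proof -
          have aux: "e > 0 \<Longrightarrow> p > 0 \<Longrightarrow> n2 * (1 / (e * p)) * e = n2 / p" for e p :: real
            by (simp add: field_simps)
          show ?thesis unfolding d_def using cL0 n20 by (intro aux) auto
        qed
        also have "\<dots> < 1" using n20 by simp
        finally show ?thesis .
      qed
      have "(norm v)\<^sup>2 > 0" using nv by simp
      have "v \<bullet> (S' *v v) = v \<bullet> (S *v v) + v \<bullet> (H *v v)"
        by (simp add: H_def matrix_vector_mult_diff_rdistrib inner_diff_right)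
      moreover have "cL\<^sup>2 * (v \<bullet> (S *v v)) \<ge> (norm v)\<^sup>2" by (rule lowS)
      moreover have "cL\<^sup>2 * \<bar>v \<bullet> (H *v v)\<bar> < (norm v)\<^sup>2"
      proof -
        have "cL\<^sup>2 * \<bar>v \<bullet> (H *v v)\<bar> \<le> cL\<^sup>2 * (n2 * norm H * (norm v)\<^sup>2)"
          using hb by (simp add: mult_left_mono)
        also have "\<dots> = (n2 * norm H * cL\<^sup>2) * (norm v)\<^sup>2" by (simp add: mult_ac)
        also have "\<dots> < 1 * (norm v)\<^sup>2"
          using \<open>n2 * norm H * cL\<^sup>2 < 1\<close> \<open>(norm v)\<^sup>2 > 0\<close> by (intro mult_strict_right_mono) auto
        finally show ?thesis by simp
      qed
      moreover have "- (cL\<^sup>2 * \<bar>v \<bullet> (H *v v)\<bar>) \<le> cL\<^sup>2 * (v \<bullet> (H *v v))"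
      proof -
        have "\<bar>cL\<^sup>2 * (v \<bullet> (H *v v))\<bar> = cL\<^sup>2 * \<bar>v \<bullet> (H *v v)\<bar>" by (simp add: abs_mult)
        moreover have "- \<bar>cL\<^sup>2 * (v \<bullet> (H *v v))\<bar> \<le> cL\<^sup>2 * (v \<bullet> (H *v v))" by simp
        ultimately show ?thesis by simp
      qed
      ultimately have "cL\<^sup>2 * (v \<bullet> (S' *v v)) > 0"
        by (simp only: distrib_left)
      then show "v \<bullet> (S' *v v) > 0" using cL0 by (simp add: zero_less_mult_iff)
    qed
  qed
qed

lemma comp_deriv: "((\<lambda>A::real^'n^'m. A$i$k) has_derivative (\<lambda>H. H$i$k)) (at A within X)"
proof -
  have "bounded_linear (\<lambda>H::real^'n^'m. H$i$k)"
    using bounded_linear_compose[OF bounded_linear_vec_nth bounded_linear_vec_nth] .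
  then show ?thesis by (rule bounded_linear_imp_has_derivative)
qed

lemma dtr2: "((\<lambda>S'. tr2 G S') has_derivative (\<lambda>H. tr2 G H)) (at S within X)"
  unfolding tr2_def by (intro has_derivative_sum has_derivative_mult_right comp_deriv)

lemma transpose_add_scale: "transpose (X + c *\<^sub>R Y) = transpose X + c *\<^sub>R transpose (Y::real^'n^'n)"
  by (simp add: transpose_def vec_eq_iff)

lemma target_form:
  fixes R M Inv H :: "real^'n^'n"
  assumes "transpose R = R" "transpose M = M"
  shows "(\<Sum>i\<in>UNIV. \<Sum>j\<in>UNIV. ((a *\<^sub>R (transpose (R + c *\<^sub>R M) - b *\<^sub>R Inv)) $ i $ j) * H $ i $ j)
    = a * (tr2 R H + c * tr2 M H - b * (\<Sum>i\<in>UNIV. \<Sum>j\<in>UNIV. Inv $ i $ j * H $ i $ j))"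
  unfolding transpose_add_scale assms tr2_def
  by (simp add: algebra_simps sum.distrib sum_subtractf sum_distrib_left)

lemma alg_phi0:
  fixes N \<mu> \<gamma> T Dn r \<tau> l c1 c2 e :: real
  assumes "Dn \<noteq> 0" "e \<noteq> 0"
  shows "N * ((\<mu> + \<gamma> * T / e) / Dn) + (r + \<tau> * (c1 - l / 2 - c2)) / e
    = (N * \<mu> / Dn + \<tau> * (c1 - c2) / e) + (N * \<gamma> / (e * Dn)) * T + (1 / e) * r
      + (- \<tau> / (2 * e)) * l"
  using assms by (simp add: field_simps)

lemma alg_phi:
  fixes N \<mu> \<gamma> T Dn r \<tau> l c1 c2 :: real
  assumes "Dn \<noteq> 0" "1 - \<gamma> \<noteq> 0"
  shows "N * ((\<mu> + \<gamma> * T / (1 - \<gamma>)) / Dn) + (r + \<tau> * (c1 - l / 2 - c2)) / (1 - \<gamma>)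
    = (N * \<mu> / Dn + \<tau> * (c1 - c2) / (1 - \<gamma>)) + (N * \<gamma> / ((1 - \<gamma>) * Dn)) * T + (1 / (1 - \<gamma>)) * r
      + (- \<tau> / (2 * (1 - \<gamma>))) * l"
  by (rule alg_phi0[OF assms])

lemma alg_final0:
  fixes N \<gamma> T Dn r \<tau> s dt e :: real
  assumes "Dn \<noteq> 0" "e \<noteq> 0" "dt \<noteq> 0"
  shows "0 + (N * \<gamma> / (e * Dn)) * T + (1 / e) * r + (- \<tau> / (2 * e)) * (dt * s * inverse dt)
    = (1 / e) * (r + (\<gamma> * (N / Dn)) * T - (\<tau> / 2) * s)"
  using assms by (simp add: field_simps)

lemma dS:
  fixes S R :: "real^'n^'n"
  assumes R: "transpose R = R" and pd: "pos_def_mat S" and g: "\<gamma> < 1" "\<gamma> * VK A B C D K < 1"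
  shows "((\<lambda>S'. (Q + K \<bullet> (R *v K)) * csig \<mu> \<gamma> (tr2 (Mmat B D) S') (VK A B C D K) + (tr2 R S' + \<tau> * centr S') / (1 - \<gamma>))
    has_derivative
     (\<lambda>H. \<Sum>i\<in>UNIV. \<Sum>j\<in>UNIV.
               ((1 / (1 - \<gamma>)) *\<^sub>R (transpose (R + (\<gamma> * PK \<gamma> A B C D Q R K) *\<^sub>R Mmat B D)
                  - (\<tau> / 2) *\<^sub>R matrix_inv S)) $ i $ j * H $ i $ j)) (at S within X)"
proof -
  define N where "N = Q + K \<bullet> (R *v K)"
  define Dn where "Dn = 1 - \<gamma> * VK A B C D K"
  have Dn: "Dn \<noteq> 0" using g unfolding Dn_def by simp
  have g1: "1 - \<gamma> \<noteq> 0" using g by simp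
  define a0 where "a0 = N * \<mu> / Dn + \<tau> * (- (real CARD('n) / 2) * ln (2 * pi) - real CARD('n) / 2) / (1 - \<gamma>)"
  define a1 where "a1 = N * \<gamma> / ((1 - \<gamma>) * Dn)"
  define a2 where "a2 = 1 / (1 - \<gamma>)"
  define a3 where "a3 = - \<tau> / (2 * (1 - \<gamma>))"
  have phi: "(\<lambda>S'. (Q + K \<bullet> (R *v K)) * csig \<mu> \<gamma> (tr2 (Mmat B D) S') (VK A B C D K) + (tr2 R S' + \<tau> * centr S') / (1 - \<gamma>))
     = (\<lambda>S'. a0 + a1 * tr2 (Mmat B D) S' + a2 * tr2 R S' + a3 * ln (det S'))"
  proof (rule ext)
    fix S'
    show "(Q + K \<bullet> (R *v K)) * csig \<mu> \<gamma> (tr2 (Mmat B D) S') (VK A B C D K) + (tr2 R S' + \<tau> * centr S') / (1 - \<gamma>)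
      = a0 + a1 * tr2 (Mmat B D) S' + a2 * tr2 R S' + a3 * ln (det S')"
      unfolding csig_def centr_def N_def[symmetric] Dn_def[symmetric] a0_def a1_def a2_def a3_def
      using alg_phi[OF Dn g1, of N \<mu> "tr2 (Mmat B D) S'" "tr2 R S'" \<tau> "- (real CARD('n) / 2) * ln (2 * pi)" "ln (det S')" "real CARD('n) / 2"]
      by simp
  qed
  have dpos: "det S > 0" by (rule pd_det_pos[OF pd])
  have sym: "transpose S = S" using pd unfolding pos_def_mat_def by simp
  have dl: "((\<lambda>S'. ln (det S')) has_derivative (\<lambda>H. det S * (\<Sum>i\<in>UNIV. \<Sum>j\<in>UNIV. matrix_inv S $ i $ j * H $ i $ j) * inverse (det S))) (at S within X)"
    by (rule has_derivative_ln[OF dpos det_has_derivative[OF sym pd_invertible[OF pd]]])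
  have d: "((\<lambda>S'. a0 + a1 * tr2 (Mmat B D) S' + a2 * tr2 R S' + a3 * ln (det S')) has_derivative
     (\<lambda>H. 0 + a1 * tr2 (Mmat B D) H + a2 * tr2 R H + a3 * (det S * (\<Sum>i\<in>UNIV. \<Sum>j\<in>UNIV. matrix_inv S $ i $ j * H $ i $ j) * inverse (det S)))) (at S within X)"
    by (intro has_derivative_add has_derivative_const has_derivative_mult_right dtr2 dl)
  show ?thesis
    unfolding phi
  proof (rule has_derivative_eq_rhs[OF d], rule ext)
    fix H :: "real^'n^'n"
    have tf: "(\<Sum>i\<in>UNIV. \<Sum>j\<in>UNIV.
               ((1 / (1 - \<gamma>)) *\<^sub>R (transpose (R + (\<gamma> * PK \<gamma> A B C D Q R K) *\<^sub>R Mmat B D)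
                  - (\<tau> / 2) *\<^sub>R matrix_inv S)) $ i $ j * H $ i $ j)
      = (1 / (1 - \<gamma>)) * (tr2 R H + (\<gamma> * PK \<gamma> A B C D Q R K) * tr2 (Mmat B D) H - (\<tau> / 2) * (\<Sum>i\<in>UNIV. \<Sum>j\<in>UNIV. matrix_inv S $ i $ j * H $ i $ j))"
      by (rule target_form[OF R Mmat_sym])
    have pk: "PK \<gamma> A B C D Q R K = N / Dn" unfolding PK_def N_def Dn_def ..
    show "0 + a1 * tr2 (Mmat B D) H + a2 * tr2 R H + a3 * (det S * (\<Sum>i\<in>UNIV. \<Sum>j\<in>UNIV. matrix_inv S $ i $ j * H $ i $ j) * inverse (det S))
      = (\<Sum>i\<in>UNIV. \<Sum>j\<in>UNIV.
               ((1 / (1 - \<gamma>)) *\<^sub>R (transpose (R + (\<gamma> * PK \<gamma> A B C D Q R K) *\<^sub>R Mmat B D)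
                  - (\<tau> / 2) *\<^sub>R matrix_inv S)) $ i $ j * H $ i $ j)"
      unfolding tf unfolding pk a1_def a2_def a3_def using dpos Dn g1 by (intro alg_final0) auto
  qed
qed

theorem lemma3:
  fixes M :: "'a measure"
    and A C Q \<gamma> \<tau> :: real
    and B K :: "real^'n"
    and D R S :: "real^'n^'n"
    and x0 :: "'a \<Rightarrow> real" and wx :: "nat \<Rightarrow> 'a \<Rightarrow> real"
    and wu xi :: "nat \<Rightarrow> 'a \<Rightarrow> real^'n"
  assumes "prob_space M"
    and "0 < \<gamma>" "\<gamma> < 1" "0 < \<tau>"
    and "transpose R = R"
    and "x0 \<in> borel_measurable M" "integrable M (\<lambda>\<omega>. (x0 \<omega>)\<^sup>2)"
    and "\<And>t. wx t \<in> borel_measurable M" "\<And>t. wu t \<in> borel_measurable M"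
    and "\<And>t. xi t \<in> borel_measurable M"
    and "prob_space.indep_vars M (\<lambda>_. borel) (srcvar x0 wx wu xi) UNIV"
    and "\<And>t. integrable M (\<lambda>\<omega>. (wx t \<omega>)\<^sup>2)"
    and "\<And>t. (\<integral>\<omega>. wx t \<omega> \<partial>M) = 0" "\<And>t. (\<integral>\<omega>. (wx t \<omega>)\<^sup>2 \<partial>M) = 1"
    and "\<And>t i. integrable M (\<lambda>\<omega>. (wu t \<omega> $ i)\<^sup>2)"
    and "\<And>t i. (\<integral>\<omega>. wu t \<omega> $ i \<partial>M) = 0"
    and "\<And>t i j. (\<integral>\<omega>. wu t \<omega> $ i * wu t \<omega> $ j \<partial>M) = (if i = j then 1 else 0)"
    and "\<And>t. prob_space.indep_vars M (\<lambda>_. borel) (\<lambda>i \<omega>. xi t \<omega> $ i) UNIV"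
    and "\<And>t i. distributed M lborel (\<lambda>\<omega>. xi t \<omega> $ i) std_normal_density"
    and "(K, S) \<in> Omega \<gamma> A B C D"
  shows "((\<lambda>K'. cost_f M A B C D Q R \<gamma> \<tau> x0 wx wu xi K' S) has_derivative
            (\<lambda>h. (S_KS M A B C D \<gamma> x0 wx wu xi K S *\<^sub>R EK \<gamma> A B C D Q R K) \<bullet> h)) (at K) \<and>
         ((\<lambda>S'. cost_f M A B C D Q R \<gamma> \<tau> x0 wx wu xi K S') has_derivative
            (\<lambda>H. \<Sum>i\<in>UNIV. \<Sum>j\<in>UNIV.
               ((1 / (1 - \<gamma>)) *\<^sub>R (transpose (R + (\<gamma> * PK \<gamma> A B C D Q R K) *\<^sub>R Mmat B D)
                  - (\<tau> / 2) *\<^sub>R matrix_inv S)) $ i $ j * H $ i $ j))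
          (at S within {S'. transpose S' = S'})"
proof -
  have L: "lqr M x0 wx wu xi" unfolding lqr_def lqr_axioms_def using assms by auto
  interpret lqr M x0 wx wu xi by (rule L)
  have pd: "pos_def_mat S" and gV: "\<gamma> * VK A B C D K < 1" using assms(20) by (auto simp: Omega_def)
  have R: "transpose R = R" by (rule assms(5))
  have g0: "0 < \<gamma>" "\<gamma> < 1" using assms(2,3) by auto
  define \<mu> where "\<mu> = (\<integral>\<omega>. (x0 \<omega>)\<^sup>2 \<partial>M)"
  define T where "T = tr2 (Mmat B D) S"
  define c where "c = (tr2 R S + \<tau> * centr S) / (1 - \<gamma>)"
  have SKS: "S_KS M A B C D \<gamma> x0 wx wu xi K S = csig \<mu> \<gamma> T (VK A B C D K)"
    unfolding \<mu>_def T_def by (rule closed_forms(1)[OF pd g0 gV])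
  have part1: "((\<lambda>K'. cost_f M A B C D Q R \<gamma> \<tau> x0 wx wu xi K' S) has_derivative
            (\<lambda>h. (S_KS M A B C D \<gamma> x0 wx wu xi K S *\<^sub>R EK \<gamma> A B C D Q R K) \<bullet> h)) (at K)"
  proof -
    define U where "U = {K'. \<gamma> * VK A B C D K' < 1}"
    have cont: "continuous_on UNIV (\<lambda>K'. \<gamma> * VK A B C D K')"
    proof -
      have "continuous (at K') (VK A B C D)" for K'
        using dVK[of A B C D K' UNIV] by (rule has_derivative_continuous)
      then have "continuous_on UNIV (VK A B C D)" by (simp add: continuous_at_imp_continuous_on)
      then show ?thesis by (intro continuous_intros)
    qed
    have oU: "open U" unfolding U_def by (rule open_Collect_less[OF cont continuous_on_const])
    have KU: "K \<in> U" using gV unfolding U_def by simp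
    have eq: "(Q + K' \<bullet> (R *v K')) * csig \<mu> \<gamma> T (VK A B C D K') + c = cost_f M A B C D Q R \<gamma> \<tau> x0 wx wu xi K' S"
      if "K' \<in> U" for K'
      using closed_forms(2)[OF pd g0, of A B C D K' Q R \<tau>] that unfolding U_def \<mu>_def T_def c_def by simp
    show ?thesis
      unfolding SKS
      by (rule has_derivative_transform_within_open[OF dK[OF R gV g0(2)] oU KU eq])
  qed
  have part2: "((\<lambda>S'. cost_f M A B C D Q R \<gamma> \<tau> x0 wx wu xi K S') has_derivative
            (\<lambda>H. \<Sum>i\<in>UNIV. \<Sum>j\<in>UNIV.
               ((1 / (1 - \<gamma>)) *\<^sub>R (transpose (R + (\<gamma> * PK \<gamma> A B C D Q R K) *\<^sub>R Mmat B D)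
                  - (\<tau> / 2) *\<^sub>R matrix_inv S)) $ i $ j * H $ i $ j))
          (at S within {S'. transpose S' = S'})"
  proof -
    obtain d where d: "d > 0" "\<And>S'. transpose S' = S' \<Longrightarrow> dist S' S < d \<Longrightarrow> pos_def_mat S'"
      using pd_nbhd[OF pd] by blast
    have Sin: "S \<in> {S'. transpose S' = S'}" using pd unfolding pos_def_mat_def by simp
    have eq: "(Q + K \<bullet> (R *v K)) * csig \<mu> \<gamma> (tr2 (Mmat B D) S') (VK A B C D K) + (tr2 R S' + \<tau> * centr S') / (1 - \<gamma>)
        = cost_f M A B C D Q R \<gamma> \<tau> x0 wx wu xi K S'"
      if "S' \<in> {S'. transpose S' = S'}" "dist S' S < d" for S'
      using closed_forms(2)[OF d(2) g0 gV, of S' Q R \<tau>] that unfolding \<mu>_def by simp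
    show ?thesis
      by (rule has_derivative_transform_within[OF dS[OF R pd g0(2) gV] d(1) Sin eq])
  qed
  show ?thesis using part1 part2 by blast
qed

end
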